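(* $\mathrm{Aut}(\mathrm{Sol}_1^4)=\mathbb{R}\rtimes\mathrm{Aut}(\mathrm{Sol}^3)=(\mathbb{R}\times\mathrm{Sol}^3)\rtimes (\mathbb{R}^+ \times D_4)$.
   Context: $\mathrm{Sol}_1^4$ is the group of real matrices $\left[\begin{smallmatrix} 1 &x &z\\ 0 &e^u &y\\ 0 &0 &1 \end{smallmatrix}\right]$, with center $\mathbb{R}$ and quotient $\mathrm{Sol}^3=\mathbb{R}^2\rtimes\mathbb{R}$ (operation $(\mathbf{x},u)(\mathbf{y},v)=(\mathbf{x}+\mathrm{diag}(e^{-u},e^{u})\mathbf{y},u+v)$). It is known that $\mathrm{Aut}(\mathrm{Sol}^3)=\mathrm{Sol}^3\rtimes(\mathbb{R}^+\times D_4)$, where $\mathbb{R}^+$ are positive scalar matrices and $D_4=\{\left[\begin{smallmatrix}\pm1&0\\0&\pm1\end{smallmatrix}\right],\left[\begin{smallmatrix}0&\pm1\\\pm1&0\end{smallmatrix}\right]\}$, and every automorphism of $\mathrm{Sol}^3$ lifts to $\mathrm{Sol}_1^4$. The kernel of $\mathrm{Aut}(\mathrm{Sol}_1^4)\to\mathrm{Aut}(\mathrm{Sol}^3)$ is $Z^1(\mathrm{Sol}^3,\mathbb{R})=\mathrm{Hom}(\mathrm{Sol}^3,\mathbb{R})\cong\mathbb{R}$, consisting of the automorphisms $\hat k$, $k\in\mathbb{R}$, sending $\left[\begin{smallmatrix} 1 &e^u x &z\\ 0 &e^u &y\\ 0 &0 &1 \end{smallmatrix}\right]$ to $\left[\begin{smallmatrix}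 1 &e^u x &z+ku\\ 0 &e^u &y\\ 0 &0 &1 \end{smallmatrix}\right]$. These commute with inner automorphisms, and $A\in D_4$ acts on this $\mathbb{R}$ by $^A\hat k=(\hat A\cdot\bar A)\hat k$, where $\hat A=\det(A)$ is the induced action on the center and $\bar A=\pm1$ the induced action on $\mathrm{Sol}^3/\mathbb{R}^2\cong\mathbb{R}$ ($\bar A=+1$ for diagonal $A$, $-1$ otherwise). *)

theory Defs
  imports "HOL-Analysis.Analysis" "HOL-Algebra.Coset"
begin

text \<open>Sol_1^4: the element (x,y,z,u) stands for the matrix
  [[1, e^u x, z],[0, e^u, y],[0,0,1]]; the operation below is matrix multiplication
  written in these coordinates.\<close>
definition sol4_mult :: "real \<times> real \<times> real \<times> real \<Rightarrow> real \<times> real \<times> real \<times> real \<Rightarrow> real \<times> real \<times> real \<times> real" where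
  "sol4_mult p q = (case p of (x, y, z, u) \<Rightarrow> case q of (x', y', z', u') \<Rightarrow>
      (x + exp (- u) * x', y + exp u * y', z + z' + exp u * x * y', u + u'))"

text \<open>Sol^3 = R^2 \<rtimes> R with ((x1,x2),u)((y1,y2),v) = ((x1 + e^{-u} y1, x2 + e^u y2), u+v).\<close>
definition sol3_mult :: "(real \<times> real) \<times> real \<Rightarrow> (real \<times> real) \<times> real \<Rightarrow> (real \<times> real) \<times> real" where
  "sol3_mult p q = (case p of ((x1, x2), u) \<Rightarrow> case q of ((y1, y2), v) \<Rightarrow>
      ((x1 + exp (- u) * y1, x2 + exp u * y2), u + v))"

definition Sol3 :: "((real \<times> real) \<times> real) monoid" where
  "Sol3 = \<lparr>carrier = UNIV, mult = sol3_mult, one = ((0, 0), 0)\<rparr>"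

text \<open>Quotient map Sol_1^4 \<rightarrow> Sol^3 = Sol_1^4 / centre (forget z).\<close>
definition sol4_proj :: "real \<times> real \<times> real \<times> real \<Rightarrow> (real \<times> real) \<times> real" where
  "sol4_proj p = (case p of (x, y, z, u) \<Rightarrow> ((x, y), u))"

text \<open>Automorphisms of a Lie group whose underlying space is the whole type:
  bijective homomorphisms that are homeomorphisms.\<close>
definition lie_auts :: "('a::topological_space \<Rightarrow> 'a \<Rightarrow> 'a) \<Rightarrow> ('a \<Rightarrow> 'a) set" where
  "lie_auts m = {f. (\<forall>x y. f (m x y) = m (f x) (f y)) \<and> continuous_on UNIV f
                    \<and> (\<exists>g. (\<forall>x. g (f x) = x) \<and> (\<forall>y. f (g y) = y) \<and> continuous_on UNIV g)}"

definition Aut_group :: "('a::topological_space \<Rightarrow> 'a \<Rightarrow> 'a) \<Rightarrow> ('a \<Rightarrow> 'a) monoid" where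
  "Aut_group m = \<lparr>carrier = lie_auts m, mult = (\<circ>), one = id\<rparr>"

abbreviation "Aut_Sol4 \<equiv> Aut_group sol4_mult"
abbreviation "Aut_Sol3 \<equiv> Aut_group sol3_mult"

text \<open>Kernel of Aut(Sol_1^4) \<rightarrow> Aut(Sol^3): automorphisms inducing the identity on Sol^3.\<close>
definition aut_kernel :: "(real \<times> real \<times> real \<times> real \<Rightarrow> real \<times> real \<times> real \<times> real) set" where
  "aut_kernel = {f \<in> lie_auts sol4_mult. \<forall>p. sol4_proj (f p) = sol4_proj p}"

definition R_add :: "real monoid" where
  "R_add = \<lparr>carrier = UNIV, mult = (+), one = 0\<rparr>"

definition R_pos :: "real monoid" where
  "R_pos = \<lparr>carrier = {r. r > 0}, mult = (*), one = 1\<rparr>"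

text \<open>D_4: signed permutation 2x2 matrices under matrix multiplication.\<close>
definition D4 :: "(real^2^2) monoid" where
  "D4 = \<lparr>carrier = {A. \<exists>s t. s \<in> {-1, 1} \<and> t \<in> {-1, 1} \<and>
              (A = vector [vector [s, 0], vector [0, t]] \<or> A = vector [vector [0, s], vector [t, 0]])},
         mult = (**), one = mat 1\<rparr>"

text \<open>Internal semidirect product decomposition G = N \<rtimes> H.\<close>
definition int_semidirect :: "('a, 'b) monoid_scheme \<Rightarrow> 'a set \<Rightarrow> 'a set \<Rightarrow> bool" where
  "int_semidirect G N H \<longleftrightarrow> N \<lhd> G \<and> subgroup H G \<and> N \<inter> H = {\<one>\<^bsub>G\<^esub>}
      \<and> N <#>\<^bsub>G\<^esub> H = carrier G"

end

theory Submission
  imports Defs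
begin

section \<open>Generic: automorphism group\<close>

lemma lie_autsD:
  assumes "f \<in> lie_auts m"
  shows "\<And>x y. f (m x y) = m (f x) (f y)" "continuous_on UNIV f"
    "\<exists>g. (\<forall>x. g (f x) = x) \<and> (\<forall>y. f (g y) = y) \<and> continuous_on UNIV g"
  using assms by (auto simp: lie_auts_def)

lemma lie_auts_inv_ex:
  assumes "f \<in> lie_auts m"
  shows "\<exists>g \<in> lie_auts m. g \<circ> f = id \<and> f \<circ> g = id"
proof -
  obtain g where g: "\<And>x. g (f x) = x" "\<And>y. f (g y) = y" "continuous_on UNIV g"
    using lie_autsD(3)[OF assms] by blast
  have hom: "g (m x y) = m (g x) (g y)" for x y
  proof -
    have "g (m x y) = g (m (f (g x)) (f (g y)))" by (simp add: g)
    also have "\<dots> = g (f (m (g x) (g y)))" by (simp add: lie_autsD(1)[OF assms])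
    finally show ?thesis by (simp add: g)
  qed
  have "g \<in> lie_auts m"
    unfolding lie_auts_def using hom g lie_autsD(2)[OF assms] by blast
  then show ?thesis using g by (auto simp: fun_eq_iff)
qed

lemma lie_auts_comp:
  assumes "f \<in> lie_auts m" "g \<in> lie_auts m"
  shows "f \<circ> g \<in> lie_auts m"
proof -
  obtain f' where f': "\<And>x. f' (f x) = x" "\<And>y. f (f' y) = y" "continuous_on UNIV f'"
    using lie_autsD(3)[OF assms(1)] by blast
  obtain g' where g': "\<And>x. g' (g x) = x" "\<And>y. g (g' y) = y" "continuous_on UNIV g'"
    using lie_autsD(3)[OF assms(2)] by blast
  have c1: "continuous_on UNIV (f \<circ> g)"
    using continuous_on_compose2[OF lie_autsD(2)[OF assms(1)] lie_autsD(2)[OF assms(2)]]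
    by (simp add: o_def)
  have c2: "continuous_on UNIV (g' \<circ> f')"
    using continuous_on_compose2[OF g'(3) f'(3)] by (simp add: o_def)
  show ?thesis unfolding lie_auts_def
    apply (intro CollectI conjI allI)
      apply (simp add: lie_autsD(1)[OF assms(1)] lie_autsD(1)[OF assms(2)])
     apply (rule c1)
    apply (rule exI[of _ "g' \<circ> f'"])
    using f' g' c2 by simp
qed

lemma id_lie_auts: "id \<in> lie_auts m"
  unfolding lie_auts_def by (auto intro: exI[of _ id])

lemma group_Aut: "group (Aut_group m)"
proof (rule groupI)
  show "\<one>\<^bsub>Aut_group m\<^esub> \<in> carrier (Aut_group m)"
    by (simp add: Aut_group_def id_lie_auts)
next
  fix x y assume "x \<in> carrier (Aut_group m)" "y \<in> carrier (Aut_group m)"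
  then show "x \<otimes>\<^bsub>Aut_group m\<^esub> y \<in> carrier (Aut_group m)"
    by (simp add: Aut_group_def lie_auts_comp)
next
  fix x y z show "x \<otimes>\<^bsub>Aut_group m\<^esub> y \<otimes>\<^bsub>Aut_group m\<^esub> z =
     x \<otimes>\<^bsub>Aut_group m\<^esub> (y \<otimes>\<^bsub>Aut_group m\<^esub> z)"
    by (simp add: Aut_group_def o_assoc)
next
  fix x show "\<one>\<^bsub>Aut_group m\<^esub> \<otimes>\<^bsub>Aut_group m\<^esub> x = x"
    by (simp add: Aut_group_def)
next
  fix x assume "x \<in> carrier (Aut_group m)"
  then show "\<exists>y\<in>carrier (Aut_group m). y \<otimes>\<^bsub>Aut_group m\<^esub> x = \<one>\<^bsub>Aut_group m\<^esub>"
    using lie_auts_inv_ex by (fastforce simp: Aut_group_def)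
qed

lemma Aut_inv:
  assumes "f \<in> lie_auts m"
  shows "inv\<^bsub>Aut_group m\<^esub> f \<in> lie_auts m"
    "inv\<^bsub>Aut_group m\<^esub> f \<circ> f = id" "f \<circ> inv\<^bsub>Aut_group m\<^esub> f = id"
proof -
  interpret group "Aut_group m" by (rule group_Aut)
  have fc: "f \<in> carrier (Aut_group m)" using assms by (simp add: Aut_group_def)
  show "inv\<^bsub>Aut_group m\<^esub> f \<in> lie_auts m" using inv_closed[OF fc] by (simp add: Aut_group_def)
  show "inv\<^bsub>Aut_group m\<^esub> f \<circ> f = id" using l_inv[OF fc] by (simp add: Aut_group_def)
  show "f \<circ> inv\<^bsub>Aut_group m\<^esub> f = id" using r_inv[OF fc] by (simp add: Aut_group_def)
qed


section \<open>Concrete maps on Sol4\<close>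

type_synonym r4 = "real \<times> real \<times> real \<times> real"
type_synonym r3 = "(real \<times> real) \<times> real"

lemma s4m: "sol4_mult (x, y, z, u) (x', y', z', u') = (x + exp (- u) * x', y + exp u * y', z + z' + exp u * x * y', u + u')"
  by (simp add: sol4_mult_def)

lemma s3m: "sol3_mult ((x, y), u) ((x', y'), u') = ((x + exp (- u) * x', y + exp u * y'), u + u')"
  by (simp add: sol3_mult_def)

definition s4inv :: "r4 \<Rightarrow> r4" where
  "s4inv p = (case p of (x, y, z, u) \<Rightarrow> (- (exp u * x), - (exp (- u) * y), x * y - z, - u))"

definition inn :: "r4 \<Rightarrow> r4 \<Rightarrow> r4" where
  "inn g p = sol4_mult (sol4_mult g p) (s4inv g)"

lemma inn_formula:
  "inn (p, q, r, v) (x, y, z, u) = (exp (- v) * x + p * (1 - exp (- u)), exp v * y + q * (1 - exp u),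
      z + exp v * p * y - exp (u - v) * x * q + p * q * (1 - exp u), u)"
  by (simp add: inn_def s4inv_def s4m exp_add exp_diff exp_minus field_simps)

definition khat :: "real \<Rightarrow> r4 \<Rightarrow> r4" where
  "khat k p = (case p of (x, y, z, u) \<Rightarrow> (x, y, z + k * u, u))"

definition dg :: "real \<Rightarrow> real \<Rightarrow> r4 \<Rightarrow> r4" where
  "dg a d p = (case p of (x, y, z, u) \<Rightarrow> (a * x, d * y, a * d * z, u))"

definition sw :: "r4 \<Rightarrow> r4" where
  "sw p = (case p of (x, y, z, u) \<Rightarrow> (y, x, x * y - z, - u))"

lemma khat_eq: "khat k = (\<lambda>p. (fst p, fst (snd p), fst (snd (snd p)) + k * snd (snd (snd p)), snd (snd (snd p))))"
  by (auto simp: fun_eq_iff khat_def split: prod.splits)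
lemma dg_eq: "dg a d = (\<lambda>p. (a * fst p, d * fst (snd p), a * d * fst (snd (snd p)), snd (snd (snd p))))"
  by (auto simp: fun_eq_iff dg_def split: prod.splits)
lemma sw_eq: "sw = (\<lambda>p. (fst (snd p), fst p, fst p * fst (snd p) - fst (snd (snd p)), - snd (snd (snd p))))"
  by (auto simp: fun_eq_iff sw_def split: prod.splits)
lemma inn_eq: "inn g = (\<lambda>p. (exp (- snd (snd (snd g))) * fst p + fst g * (1 - exp (- snd (snd (snd p)))),
    exp (snd (snd (snd g))) * fst (snd p) + fst (snd g) * (1 - exp (snd (snd (snd p)))),
    fst (snd (snd p)) + exp (snd (snd (snd g))) * fst g * fst (snd p)
      - exp (snd (snd (snd p)) - snd (snd (snd g))) * fst p * fst (snd g)
      + fst g * fst (snd g) * (1 - exp (snd (snd (snd p)))), snd (snd (snd p))))"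
  apply (rule ext) apply (cases g) apply (case_tac p) by (simp add: inn_formula)

lemma cont_khat: "continuous_on UNIV (khat k)"
  unfolding khat_eq by (intro continuous_intros)
lemma cont_dg: "continuous_on UNIV (dg a d)"
  unfolding dg_eq by (intro continuous_intros)
lemma cont_sw: "continuous_on UNIV sw"
  unfolding sw_eq by (intro continuous_intros)
lemma cont_inn: "continuous_on UNIV (inn g)"
  unfolding inn_eq by (intro continuous_intros)

lemma lie_autsI:
  assumes "\<And>x y. f (m x y) = m (f x) (f y)" "continuous_on UNIV f"
    "\<And>x. g (f x) = x" "\<And>y. f (g y) = y" "continuous_on UNIV g"
  shows "f \<in> lie_auts m"
  using assms unfolding lie_auts_def by blast

lemma khat_hom: "khat k (sol4_mult a b) = sol4_mult (khat k a) (khat k b)"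
  by (cases a; cases b) (simp add: khat_def s4m algebra_simps)
lemma dg_hom: "dg a d (sol4_mult p q) = sol4_mult (dg a d p) (dg a d q)"
  by (cases p; cases q) (simp add: dg_def s4m algebra_simps)
lemma sw_hom: "sw (sol4_mult p q) = sol4_mult (sw p) (sw q)"
  by (cases p; cases q) (simp add: sw_def s4m algebra_simps exp_minus field_simps)
lemma inn_hom: "inn g (sol4_mult p q) = sol4_mult (inn g p) (inn g q)"
  by (cases g; cases p; cases q) (simp add: inn_formula s4m algebra_simps exp_minus exp_diff exp_add field_simps)

lemma khat_khat: "khat k (khat k' p) = khat (k + k') p"
  by (cases p) (simp add: khat_def algebra_simps)
lemma khat_0: "khat 0 = id"
  by (auto simp: fun_eq_iff khat_def)
lemma dg_dg: "dg a d (dg a' d' p) = dg (a * a') (d * d') p"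
  by (cases p) (simp add: dg_def algebra_simps)
lemma dg_1: "dg 1 1 = id"
  by (auto simp: fun_eq_iff dg_def)
lemma sw_sw: "sw (sw p) = p"
  by (cases p) (simp add: sw_def algebra_simps)
lemma dg_sw: "dg a d (sw p) = sw (dg d a p)"
  by (cases p) (simp add: sw_def dg_def algebra_simps)
lemma inn_inn: "inn g (inn h p) = inn (sol4_mult g h) p"
  by (cases g; cases h; cases p) (simp add: inn_formula s4m algebra_simps exp_minus exp_diff exp_add field_simps)
lemma inn_one: "inn (0,0,0,0) = id"
  by (auto simp: fun_eq_iff inn_formula)
lemma inn_s4inv: "inn (s4inv g) (inn g p) = p"
  by (cases g; cases p) (simp add: inn_formula s4inv_def algebra_simps exp_minus exp_diff exp_add field_simps)
lemma s4inv_inv: "s4inv (s4inv g) = g"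
  by (cases g) (simp add: s4inv_def exp_minus field_simps)

lemma khat_aut: "khat k \<in> lie_auts sol4_mult"
  by (rule lie_autsI[where g = "khat (-k)"]) (simp_all add: khat_hom cont_khat khat_khat khat_0)
lemma dg_aut: "a \<noteq> 0 \<Longrightarrow> d \<noteq> 0 \<Longrightarrow> dg a d \<in> lie_auts sol4_mult"
  by (rule lie_autsI[where g = "dg (1/a) (1/d)"]) (simp_all add: dg_hom cont_dg dg_dg dg_1)
lemma sw_aut: "sw \<in> lie_auts sol4_mult"
  by (rule lie_autsI[where g = "sw"]) (simp_all add: sw_hom cont_sw sw_sw)
lemma inn_aut: "inn g \<in> lie_auts sol4_mult"
  by (rule lie_autsI[where g = "inn (s4inv g)"])
    (simp_all add: inn_hom cont_inn inn_s4inv, metis inn_s4inv s4inv_inv)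


section \<open>Continuous additive functions\<close>

lemma cadd:
  fixes f :: "real \<Rightarrow> real"
  assumes add: "\<And>x y. f (x + y) = f x + f y" and cont: "continuous_on UNIV f"
  shows "f x = f 1 * x"
proof -
  define g where "g = (\<lambda>x. f x - f 1 * x)"
  have gadd: "g (x + y) = g x + g y" for x y by (simp add: g_def add algebra_simps)
  have g0: "g 0 = 0" using gadd[of 0 0] by simp
  have gnat: "g (real n * x) = real n * g x" for n x
  proof (induction n)
    case 0 show ?case by (simp add: g0)
  next
    case (Suc n)
    have "real (Suc n) * x = real n * x + x" by (simp add: algebra_simps)
    then show ?case using Suc by (simp add: gadd algebra_simps)
  qed
  have gneg: "g (- x) = - g x" for x using gadd[of x "-x"] g0 by simp
  have gint: "g (real_of_int a * x) = real_of_int a * g x" for a x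
  proof -
    have "a = int (nat a) \<or> a = - int (nat (-a))" by auto
    then show ?thesis
    proof
      assume "a = int (nat a)"
      then show ?thesis using gnat[of "nat a" x] by (metis of_int_of_nat_eq)
    next
      assume a: "a = - int (nat (-a))"
      have "g (real_of_int a * x) = g (- (real (nat (-a)) * x))"
        by (subst a) simp
      also have "\<dots> = - (real (nat (-a)) * g x)" by (simp add: gneg gnat)
      also have "\<dots> = real_of_int a * g x" by (subst (2) a) simp
      finally show ?thesis .
    qed
  qed
  have g1: "g 1 = 0" by (simp add: g_def)
  have grat: "g q = 0" if qR: "q \<in> \<rat>" for q
  proof -
    obtain a b where ab: "b > 0" "q = of_int a / of_int b"
      using Rats_cases'[OF qR] by blast
    have "real_of_int b * g q = g (real_of_int b * q)" by (simp add: gint)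
    also have "real_of_int b * q = real_of_int a * 1" using ab by simp
    also have "g \<dots> = 0" using gint[of a 1] g1 by simp
    finally show ?thesis using ab by simp
  qed
  have contg: "continuous_on UNIV g" unfolding g_def by (intro continuous_intros cont)
  have "g x = 0"
    using continuous_constant_on_closure[of "\<rat>" g 0 x] Rats_closure_real grat contg by auto
  then show ?thesis by (simp add: g_def)
qed

section \<open>Automorphisms of Sol3\<close>

definition F3 :: "real \<Rightarrow> real \<Rightarrow> real \<Rightarrow> real \<Rightarrow> r3 \<Rightarrow> r3" where
  "F3 al de a b p = (case p of ((x, y), u) \<Rightarrow>
     ((al * x + a * (1 - exp (- u)), de * y + b * (1 - exp u)), u))"

definition sw3 :: "r3 \<Rightarrow> r3" where
  "sw3 p = (case p of ((x, y), u) \<Rightarrow> ((y, x), - u))"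

lemma C3:
  assumes f: "f \<in> lie_auts sol3_mult"
  shows "\<exists>al de a b. al \<noteq> 0 \<and> de \<noteq> 0 \<and> (f = F3 al de a b \<or> f = F3 al de a b \<circ> sw3)"
proof -
  note hom = lie_autsD(1)[OF f]
  note cont = lie_autsD(2)[OF f]
  obtain g where g: "\<And>x. g (f x) = x" using lie_autsD(3)[OF f] by blast
  have inj: "f p = f q \<Longrightarrow> p = q" for p q by (metis g)
  have e: "f ((0,0),0) = ((0,0),0)"
  proof -
    obtain a b c where abc: "f ((0,0),0) = ((a,b),c)" by (metis prod.exhaust)
    have m: "sol3_mult ((0,0),0) ((0,0),0) = ((0::real,0::real),0::real)" by (simp add: s3m)
    have "f ((0,0),0) = sol3_mult (f ((0,0),0)) (f ((0,0),0))"
      using hom[of "((0,0),0)" "((0,0),0)"] unfolding m .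
    then have E: "((a,b),c) = ((a + exp (- c) * a, b + exp c * b), c + c)"
      by (simp only: abc s3m)
    then have E2: "a = a + exp (- c) * a" "b = b + exp c * b" "c = c + c"
      by (simp_all only: prod.inject)
    then have "c = 0" by linarith
    with E2 have "a = 0 \<and> b = 0" by simp
    then show ?thesis using abc \<open>c = 0\<close> by simp
  qed
  define \<phi> where "\<phi> p = snd (f p)" for p
  have \<phi>add: "\<phi> (sol3_mult p q) = \<phi> p + \<phi> q" for p q
    unfolding \<phi>_def hom by (simp add: sol3_mult_def split: prod.splits)
  have \<phi>x: "\<phi> ((x,0),0) = 0" for x
  proof -
    have a: "\<phi> ((exp (- s) * x, 0), 0) = \<phi> ((x, 0), 0)" for s x
    proof -
      have "sol3_mult ((0,0),s) ((x,0),0) = sol3_mult ((exp (- s) * x, 0), 0) ((0,0),s)"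
        by (simp add: s3m)
      then have "\<phi> (sol3_mult ((0,0),s) ((x,0),0)) = \<phi> (sol3_mult ((exp (- s) * x, 0), 0) ((0,0),s))"
        by simp
      then show ?thesis by (simp add: \<phi>add)
    qed
    have b: "\<phi> ((x + x, 0), 0) = \<phi> ((x, 0), 0) + \<phi> ((x, 0), 0)"
      using \<phi>add[of "((x,0),0)" "((x,0),0)"] by (simp add: s3m)
    have "\<phi> ((x + x, 0), 0) = \<phi> ((x, 0), 0)"
      using a[of "- ln 2" x] by (simp add: mult_2[symmetric])
    then show ?thesis using b by simp
  qed
  have \<phi>y: "\<phi> ((0,y),0) = 0" for y
  proof -
    have a: "\<phi> ((0, exp s * y), 0) = \<phi> ((0, y), 0)" for s y
    proof -
      have "sol3_mult ((0,0),s) ((0,y),0) = sol3_mult ((0, exp s * y), 0) ((0,0),s)"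
        by (simp add: s3m)
      then have "\<phi> (sol3_mult ((0,0),s) ((0,y),0)) = \<phi> (sol3_mult ((0, exp s * y), 0) ((0,0),s))"
        by simp
      then show ?thesis by (simp add: \<phi>add)
    qed
    have b: "\<phi> ((0, y + y), 0) = \<phi> ((0, y), 0) + \<phi> ((0, y), 0)"
      using \<phi>add[of "((0,y),0)" "((0,y),0)"] by (simp add: s3m)
    have "\<phi> ((0, y + y), 0) = \<phi> ((0, y), 0)"
      using a[of "ln 2" y] by (simp add: mult_2[symmetric])
    then show ?thesis using b by simp
  qed
  define \<psi> where "\<psi> u = \<phi> ((0,0),u)" for u
  have \<phi>\<psi>: "\<phi> ((x,y),u) = \<psi> u" for x y u
  proof -
    have "((x,y),u) = sol3_mult (sol3_mult ((x,0),0) ((0,y),0)) ((0,0),u)" by (simp add: s3m)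
    then have "\<phi> ((x,y),u) = \<phi> (sol3_mult (sol3_mult ((x,0),0) ((0,y),0)) ((0,0),u))" by simp
    then show ?thesis by (simp add: \<phi>add \<phi>x \<phi>y \<psi>_def)
  qed
  have \<psi>add: "\<psi> (u + v) = \<psi> u + \<psi> v" for u v
    using \<phi>add[of "((0,0),u)" "((0,0),v)"] by (simp add: s3m \<psi>_def)
  have \<psi>cont: "continuous_on UNIV \<psi>"
  proof -
    have "continuous_on UNIV (\<lambda>u. snd (f ((0::real,0::real),u)))"
      by (rule continuous_on_compose2[OF continuous_on_snd[OF continuous_on_id] continuous_on_compose2[OF cont]])
        (auto intro!: continuous_intros)
    then show ?thesis by (simp add: \<psi>_def \<phi>_def)
  qed
  define c where "c = \<psi> 1"
  have sndf: "snd (f ((x,y),u)) = c * u" for x y u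
    using cadd[of \<psi> u, OF \<psi>add \<psi>cont] \<phi>\<psi>[of x y u] by (simp add: \<phi>_def c_def mult.commute)
  define L1 where "L1 x y = fst (fst (f ((x,y),0)))" for x y
  define L2 where "L2 x y = snd (fst (f ((x,y),0)))" for x y
  have fN: "f ((x,y),0) = ((L1 x y, L2 x y), 0)" for x y
    using sndf[of x y 0] by (simp add: L1_def L2_def prod_eq_iff)
  have Ladd: "L1 (x + x') (y + y') = L1 x y + L1 x' y' \<and> L2 (x + x') (y + y') = L2 x y + L2 x' y'"
    for x y x' y'
  proof -
    show ?thesis using hom[of "((x,y),0)" "((x',y'),0)"] by (simp add: fN s3m)
  qed
  have contL: "continuous_on UNIV (\<lambda>x. L1 x 0)" "continuous_on UNIV (\<lambda>y. L1 0 y)"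
    "continuous_on UNIV (\<lambda>x. L2 x 0)" "continuous_on UNIV (\<lambda>y. L2 0 y)"
    unfolding L1_def L2_def
    by (auto intro!: continuous_on_compose2[OF continuous_on_fst[OF continuous_on_id]]
        continuous_on_compose2[OF continuous_on_snd[OF continuous_on_id]]
        continuous_on_compose2[OF cont] continuous_intros)
  have La: "\<And>x x'. L1 (x + x') 0 = L1 x 0 + L1 x' 0" "\<And>y y'. L1 0 (y + y') = L1 0 y + L1 0 y'"
    "\<And>x x'. L2 (x + x') 0 = L2 x 0 + L2 x' 0" "\<And>y y'. L2 0 (y + y') = L2 0 y + L2 0 y'"
    subgoal for x x' using Ladd[where x=x and y=0 and x'=x' and y'=0] by simp
    subgoal for y y' using Ladd[where x=0 and y=y and x'=0 and y'=y'] by simp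
    subgoal for x x' using Ladd[where x=x and y=0 and x'=x' and y'=0] by simp
    subgoal for y y' using Ladd[where x=0 and y=y and x'=0 and y'=y'] by simp
    done
  define al where "al = L1 1 0"
  define ga where "ga = L1 0 1"
  define be where "be = L2 1 0"
  define de where "de = L2 0 1"
  have L1f: "L1 x y = al * x + ga * y" for x y
  proof -
    have "L1 x y = L1 x 0 + L1 0 y" using Ladd[of x 0 0 y] by simp
    also have "L1 x 0 = L1 1 0 * x" by (rule cadd[OF La(1) contL(1)])
    also have "L1 0 y = L1 0 1 * y" by (rule cadd[OF La(2) contL(2)])
    finally show ?thesis by (simp add: al_def ga_def mult.commute)
  qed
  have L2f: "L2 x y = be * x + de * y" for x y
  proof -
    have "L2 x y = L2 x 0 + L2 0 y" using Ladd[of x 0 0 y] by simp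
    also have "L2 x 0 = L2 1 0 * x" by (rule cadd[OF La(3) contL(3)])
    also have "L2 0 y = L2 0 1 * y" by (rule cadd[OF La(4) contL(4)])
    finally show ?thesis by (simp add: be_def de_def mult.commute)
  qed
  define P where "P s = fst (fst (f ((0,0),s)))" for s
  define Q where "Q s = snd (fst (f ((0,0),s)))" for s
  have fT: "f ((0,0),s) = ((P s, Q s), c * s)" for s
    using sndf[of 0 0 s] by (simp add: P_def Q_def prod_eq_iff)
  have conj: "L1 (exp (- s) * x) (exp s * y) = exp (- (c * s)) * L1 x y \<and>
              L2 (exp (- s) * x) (exp s * y) = exp (c * s) * L2 x y" for s x y
  proof -
    have h1: "f ((exp (- s) * x, exp s * y), s) = sol3_mult (f ((0,0),s)) (f ((x,y),0))"
      using hom[of "((0,0),s)" "((x,y),0)"] by (simp add: s3m)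
    have h2: "f ((exp (- s) * x, exp s * y), s) = sol3_mult (f ((exp (- s) * x, exp s * y),0)) (f ((0,0),s))"
      using hom[of "((exp (- s) * x, exp s * y),0)" "((0,0),s)"] by (simp add: s3m)
    show ?thesis using h1 h2 by (simp add: fT fN s3m)
  qed
  have eq1: "al * exp (- s) = exp (- (c * s)) * al" for s using conj[of s 1 0] by (simp add: L1f)
  have eq2: "ga * exp s = exp (- (c * s)) * ga" for s using conj[of s 0 1] by (simp add: L1f)
  have eq3: "be * exp (- s) = exp (c * s) * be" for s using conj[of s 1 0] by (simp add: L2f)
  have eq4: "de * exp s = exp (c * s) * de" for s using conj[of s 0 1] by (simp add: L2f)
  have ne10: "f ((1,0),0) \<noteq> ((0,0),0)" "f ((0,1),0) \<noteq> ((0,0),0)"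
    using inj[of "((1,0),0)" "((0,0),0)"] inj[of "((0,1),0)" "((0,0),0)"] e by auto
  have Pfe: "P s * (1 - exp (- c)) = P 1 * (1 - exp (- (c * s)))
          \<and> Q s * (1 - exp c) = Q 1 * (1 - exp (c * s))" for s
  proof -
    have h1: "f ((0,0),s + 1) = sol3_mult (f ((0,0),s)) (f ((0,0),1))"
      using hom[of "((0,0),s)" "((0,0),1)"] by (simp add: s3m)
    have h2: "f ((0,0),s + 1) = sol3_mult (f ((0,0),1)) (f ((0,0),s))"
      using hom[of "((0,0),1)" "((0,0),s)"] by (simp add: s3m add.commute)
    have "P s + exp (- (c * s)) * P 1 = P 1 + exp (- c) * P s \<and>
               Q s + exp (c * s) * Q 1 = Q 1 + exp c * Q s"
      using h1 h2 by (simp add: fT s3m)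
    then show ?thesis by (simp add: algebra_simps)
  qed
  have cases: "c = 1 \<or> c = -1"
  proof (rule ccontr)
    assume nc: "\<not> (c = 1 \<or> c = -1)"
    have "al = 0" using eq1[of 1] nc by auto
    moreover have "ga = 0" using eq2[of 1] nc by auto
    moreover have "be = 0" using eq3[of 1] nc by auto
    moreover have "de = 0" using eq4[of 1] nc by auto
    ultimately show False using ne10(1) fN[of 1 0] by (simp add: L1f L2f)
  qed
  have fsplit: "f ((x,y),u) = ((L1 x y + P u, L2 x y + Q u), c * u)" for x y u
  proof -
    show ?thesis using hom[of "((x,y),0)" "((0,0),u)"] by (simp add: fN fT s3m)
  qed
  from cases show ?thesis
  proof
    assume c1: "c = 1"
    have "ga = 0" using eq2[of 1] by (simp add: c1)
    moreover have "be = 0" using eq3[of 1] by (simp add: c1)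
    ultimately have al0: "al \<noteq> 0" and de0: "de \<noteq> 0"
      using ne10 fN[of 1 0] fN[of 0 1] by (auto simp: L1f L2f)
    define a where "a = P 1 / (1 - exp (- 1))"
    define b where "b = Q 1 / (1 - exp 1)"
    have Pf: "P s = a * (1 - exp (- s))" for s
      using Pfe[of s] by (simp add: c1 a_def field_simps)
    have Qf: "Q s = b * (1 - exp s)" for s
      using Pfe[of s] by (simp add: c1 b_def field_simps)
    have "f = F3 al de a b"
      by (auto simp: fun_eq_iff F3_def fsplit L1f L2f Pf Qf c1 \<open>ga = 0\<close> \<open>be = 0\<close>)
    then show ?thesis using al0 de0 by blast
  next
    assume c1: "c = -1"
    have "al = 0" using eq1[of 1] by (simp add: c1)
    moreover have "de = 0" using eq4[of 1] by (simp add: c1)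
    ultimately have ga0: "ga \<noteq> 0" and be0: "be \<noteq> 0"
      using ne10 fN[of 1 0] fN[of 0 1] by (auto simp: L1f L2f)
    define a where "a = P 1 / (1 - exp 1)"
    define b where "b = Q 1 / (1 - exp (- 1))"
    have Pf: "P s = a * (1 - exp s)" for s
      using Pfe[of s] by (simp add: c1 a_def field_simps)
    have Qf: "Q s = b * (1 - exp (- s))" for s
      using Pfe[of s] by (simp add: c1 b_def field_simps)
    have "f = F3 ga be a b \<circ> sw3"
      by (auto simp: fun_eq_iff F3_def sw3_def fsplit L1f L2f Pf Qf c1 \<open>al = 0\<close> \<open>de = 0\<close>)
    then show ?thesis using ga0 be0 by blast
  qed
qed


section \<open>Projection Aut(Sol4) -> Aut(Sol3)\<close>

definition lift3 :: "r3 \<Rightarrow> r4" where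
  "lift3 q = (case q of ((x, y), u) \<Rightarrow> (x, y, 0, u))"

definition piA :: "(r4 \<Rightarrow> r4) \<Rightarrow> r3 \<Rightarrow> r3" where
  "piA f = (\<lambda>q. sol4_proj (f (lift3 q)))"

lemma proj_t: "sol4_proj (x, y, z, u) = ((x, y), u)"
  by (simp add: sol4_proj_def)
lemma lift_t: "lift3 ((x, y), u) = (x, y, 0, u)"
  by (simp add: lift3_def)
lemma proj_lift: "sol4_proj (lift3 q) = q"
  by (auto simp: sol4_proj_def lift3_def split: prod.splits)
lemma proj_hom: "sol4_proj (sol4_mult p q) = sol3_mult (sol4_proj p) (sol4_proj q)"
  by (cases p; cases q) (simp add: s4m s3m proj_t)
lemma proj_eq: "sol4_proj = (\<lambda>p. ((fst p, fst (snd p)), snd (snd (snd p))))"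
  by (auto simp: fun_eq_iff sol4_proj_def split: prod.splits)
lemma lift_eq: "lift3 = (\<lambda>q. (fst (fst q), snd (fst q), 0, snd q))"
  by (auto simp: fun_eq_iff lift3_def split: prod.splits)
lemma cont_proj: "continuous_on UNIV sol4_proj"
  unfolding proj_eq by (intro continuous_intros)
lemma cont_lift: "continuous_on UNIV lift3"
  unfolding lift_eq by (intro continuous_intros)

lemma fix0: "(x::real) = a * x \<Longrightarrow> a \<noteq> 1 \<Longrightarrow> x = 0"
proof -
  assume "x = a * x" "a \<noteq> 1"
  then have "(a - 1) * x = 0" by (simp add: algebra_simps)
  then show "x = 0" using \<open>a \<noteq> 1\<close> by simp
qed

lemma central_form:
  assumes "\<And>q. sol4_mult c q = sol4_mult q c"
  shows "\<exists>w. c = (0, 0, w, 0)"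
proof -
  obtain x y z u where c: "c = (x, y, z, u)" by (metis prod.exhaust)
  have "sol4_mult c (0,0,0,1) = sol4_mult (0,0,0,1) c" by (rule assms)
  then have xy: "x = exp (- 1) * x" "y = exp 1 * y" by (simp_all add: c s4m)
  then have x0: "x = 0" and y0: "y = 0" by (auto intro: fix0)
  have "sol4_mult c (1,0,0,0) = sol4_mult (1,0,0,0) c" by (rule assms)
  then have "exp (- u) = 1" by (simp add: c s4m x0 y0)
  then have "u = 0" by simp
  then show ?thesis using c x0 y0 by blast
qed

lemma central_t: "sol4_mult (0, 0, w, 0) q = sol4_mult q (0, 0, w, 0)"
  by (cases q) (simp add: s4m)

lemma aut_central:
  assumes f: "f \<in> lie_auts sol4_mult"
  shows "\<exists>w'. f (0, 0, w, 0) = (0, 0, w', 0)"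
proof -
  obtain g where g: "\<And>y. f (g y) = y" using lie_autsD(3)[OF f] by blast
  have "sol4_mult (f (0,0,w,0)) q = sol4_mult q (f (0,0,w,0))" for q
  proof -
    have "sol4_mult (f (0,0,w,0)) q = f (sol4_mult (0,0,w,0) (g q))"
      by (simp add: lie_autsD(1)[OF f] g)
    also have "\<dots> = f (sol4_mult (g q) (0,0,w,0))" by (simp only: central_t)
    also have "\<dots> = sol4_mult q (f (0,0,w,0))" by (simp add: lie_autsD(1)[OF f] g)
    finally show ?thesis .
  qed
  then show ?thesis by (rule central_form)
qed

lemma proj_f:
  assumes f: "f \<in> lie_auts sol4_mult"
  shows "sol4_proj (f p) = piA f (sol4_proj p)"
proof -
  obtain x y z u where p: "p = (x, y, z, u)" by (metis prod.exhaust)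
  obtain w' where w: "f (0, 0, z, 0) = (0, 0, w', 0)" using aut_central[OF f] by blast
  have "p = sol4_mult (x, y, 0, u) (0, 0, z, 0)" by (simp add: p s4m)
  then have "f p = sol4_mult (f (x, y, 0, u)) (0, 0, w', 0)"
    by (simp add: lie_autsD(1)[OF f] w)
  moreover obtain a b c d where "f (x, y, 0, u) = (a, b, c, d)" by (metis prod.exhaust)
  ultimately show ?thesis by (simp add: p piA_def proj_t lift_t s4m)
qed

lemma piA_aut:
  assumes f: "f \<in> lie_auts sol4_mult"
  shows "piA f \<in> lie_auts sol3_mult"
proof -
  obtain g where g: "g \<in> lie_auts sol4_mult" "g \<circ> f = id" "f \<circ> g = id"
    using lie_auts_inv_ex[OF f] by blast
  have hom: "piA f (sol3_mult a b) = sol3_mult (piA f a) (piA f b)" for a b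
  proof -
    have "piA f (sol3_mult a b) = piA f (sol4_proj (sol4_mult (lift3 a) (lift3 b)))"
      by (simp add: proj_hom proj_lift)
    also have "\<dots> = sol4_proj (f (sol4_mult (lift3 a) (lift3 b)))" by (simp add: proj_f[OF f])
    also have "\<dots> = sol3_mult (piA f a) (piA f b)"
      by (simp add: lie_autsD(1)[OF f] proj_hom piA_def)
    finally show ?thesis .
  qed
  have cont: "continuous_on UNIV (piA h)"
    if "continuous_on UNIV h" for h
    unfolding piA_def
    by (rule continuous_on_compose2[OF cont_proj continuous_on_compose2[OF that cont_lift]]) auto
  have inv1: "piA g (piA f q) = q" for q
  proof -
    have "piA f q = sol4_proj (f (lift3 q))" by (simp add: piA_def)
    then have "piA g (piA f q) = sol4_proj (g (f (lift3 q)))"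
      using proj_f[OF g(1), of "f (lift3 q)"] by simp
    also have "\<dots> = q" using fun_cong[OF g(2), of "lift3 q"] by (simp add: proj_lift)
    finally show ?thesis .
  qed
  have inv2: "piA f (piA g q) = q" for q
  proof -
    have "piA g q = sol4_proj (g (lift3 q))" by (simp add: piA_def)
    then have "piA f (piA g q) = sol4_proj (f (g (lift3 q)))"
      using proj_f[OF f, of "g (lift3 q)"] by simp
    also have "\<dots> = q" using fun_cong[OF g(3), of "lift3 q"] by (simp add: proj_lift)
    finally show ?thesis .
  qed
  show ?thesis
    by (rule lie_autsI[where g="piA g"]) (simp_all add: hom inv1 inv2 cont lie_autsD(2)[OF f] lie_autsD(2)[OF g(1)])
qed

lemma piA_comp:
  assumes "f \<in> lie_auts sol4_mult" "g \<in> lie_auts sol4_mult"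
  shows "piA (f \<circ> g) = piA f \<circ> piA g"
  by (simp add: fun_eq_iff piA_def[of "f \<circ> g"] piA_def[of g] proj_f[OF assms(1)])

lemma piA_id: "piA id = id"
  by (auto simp: fun_eq_iff piA_def proj_lift)

lemma kernel_iff: "f \<in> aut_kernel \<longleftrightarrow> f \<in> lie_auts sol4_mult \<and> piA f = id"
proof
  assume "f \<in> aut_kernel"
  then show "f \<in> lie_auts sol4_mult \<and> piA f = id"
    by (auto simp: aut_kernel_def piA_def fun_eq_iff lift3_def proj_t split: prod.splits)
next
  assume "f \<in> lie_auts sol4_mult \<and> piA f = id"
  then show "f \<in> aut_kernel"
    by (auto simp: aut_kernel_def proj_f)
qed

lemma khat_kernel: "khat k \<in> aut_kernel"
  using khat_aut by (auto simp: aut_kernel_def khat_def sol4_proj_def split: prod.splits)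

lemma kernel_khat:
  assumes fk: "f \<in> aut_kernel"
  shows "\<exists>k. f = khat k"
proof -
  have f: "f \<in> lie_auts sol4_mult" using fk by (simp add: aut_kernel_def)
  note hom = lie_autsD(1)[OF f]
  define \<theta> where "\<theta> p = fst (snd (snd (f p))) - fst (snd (snd p))" for p
  have fform: "f (x, y, z, u) = (x, y, z + \<theta> (x, y, z, u), u)" for x y z u
  proof -
    have "sol4_proj (f (x, y, z, u)) = ((x, y), u)" using fk by (simp add: aut_kernel_def proj_t)
    then show ?thesis by (cases "f (x, y, z, u)") (simp add: \<theta>_def proj_t)
  qed
  have \<theta>add: "\<theta> (sol4_mult p q) = \<theta> p + \<theta> q" for p q
  proof -
    obtain x y z u where p: "p = (x, y, z, u)" by (metis prod.exhaust)
    obtain x' y' z' u' where q: "q = (x', y', z', u')" by (metis prod.exhaust)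
    show ?thesis using hom[of p q] by (simp add: p q s4m fform)
  qed
  have tx: "\<theta> (x, 0, 0, 0) = 0" for x
  proof -
    have a: "\<theta> (exp (- s) * x, 0, 0, 0) = \<theta> (x, 0, 0, 0)" for s
      using \<theta>add[of "(0,0,0,s)" "(x,0,0,0)"] \<theta>add[of "(exp (- s) * x,0,0,0)" "(0,0,0,s)"]
      by (simp add: s4m)
    have b: "\<theta> (x + x, 0, 0, 0) = \<theta> (x, 0, 0, 0) + \<theta> (x, 0, 0, 0)"
      using \<theta>add[of "(x,0,0,0)" "(x,0,0,0)"] by (simp add: s4m)
    show ?thesis using a[of "- ln 2"] b by (simp add: mult_2[symmetric])
  qed
  have ty: "\<theta> (0, y, 0, 0) = 0" for y
  proof -
    have a: "\<theta> (0, exp s * y, 0, 0) = \<theta> (0, y, 0, 0)" for s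
      using \<theta>add[of "(0,0,0,s)" "(0,y,0,0)"] \<theta>add[of "(0,exp s * y,0,0)" "(0,0,0,s)"]
      by (simp add: s4m)
    have b: "\<theta> (0, y + y, 0, 0) = \<theta> (0, y, 0, 0) + \<theta> (0, y, 0, 0)"
      using \<theta>add[of "(0,y,0,0)" "(0,y,0,0)"] by (simp add: s4m)
    show ?thesis using a[of "ln 2"] b by (simp add: mult_2[symmetric])
  qed
  have tz: "\<theta> (0, 0, w, 0) = 0" for w
    using \<theta>add[of "(w,0,0,0)" "(0,1,0,0)"] \<theta>add[of "(0,1,0,0)" "(w,0,0,0)"]
      \<theta>add[of "(w,1,0,0)" "(0,0,w,0)"]
    by (simp add: s4m tx ty)
  define \<psi> where "\<psi> u = \<theta> (0, 0, 0, u)" for u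
  have tu: "\<theta> (x, y, z, u) = \<psi> u" for x y z u
    using \<theta>add[of "(x,0,0,0)" "(0,y,0,0)"] \<theta>add[of "(x,y,x*y,0)" "(0,0,z-x*y,0)"]
      \<theta>add[of "(x,y,z,0)" "(0,0,0,u)"]
    by (simp add: s4m tx ty tz \<psi>_def)
  have \<psi>add: "\<psi> (u + v) = \<psi> u + \<psi> v" for u v
    using \<theta>add[of "(0,0,0,u)" "(0,0,0,v)"] by (simp add: s4m \<psi>_def)
  have \<psi>cont: "continuous_on UNIV \<psi>"
  proof -
    have "continuous_on UNIV (\<lambda>u. fst (snd (snd (f (0::real, 0::real, 0::real, u)))))"
      by (rule continuous_on_compose2[OF continuous_on_fst[OF continuous_on_snd[OF continuous_on_snd[OF continuous_on_id]]]
              continuous_on_compose2[OF lie_autsD(2)[OF f]]]) (auto intro!: continuous_intros)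
    then show ?thesis by (simp add: \<psi>_def \<theta>_def)
  qed
  have "f = khat (\<psi> 1)"
  proof
    fix p :: r4
    obtain x y z u where p: "p = (x, y, z, u)" by (metis prod.exhaust)
    have "\<psi> u = \<psi> 1 * u" by (rule cadd[OF \<psi>add \<psi>cont])
    then show "f p = khat (\<psi> 1) p" by (simp add: p fform khat_def tu)
  qed
  then show ?thesis by blast
qed

lemma piA_L1: "piA (inn (a, b, 0, 0) \<circ> dg al de) = F3 al de a b"
  by (auto simp: fun_eq_iff piA_def lift3_def F3_def dg_def inn_formula sol4_proj_def split: prod.splits)

lemma piA_L2: "piA (inn (a, b, 0, 0) \<circ> dg al de \<circ> sw) = F3 al de a b \<circ> sw3"
  by (auto simp: fun_eq_iff piA_def lift3_def F3_def dg_def sw_def sw3_def inn_formula sol4_proj_def split: prod.splits)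


section \<open>Classification of Aut(Sol4)\<close>

lemma Aut4_class:
  assumes f: "f \<in> lie_auts sol4_mult"
  shows "\<exists>k a b al de. al \<noteq> 0 \<and> de \<noteq> 0 \<and>
    (f = khat k \<circ> (inn (a, b, 0, 0) \<circ> dg al de) \<or> f = khat k \<circ> (inn (a, b, 0, 0) \<circ> dg al de \<circ> sw))"
proof -
  obtain al de a b where ad: "al \<noteq> 0" "de \<noteq> 0"
    and c: "piA f = F3 al de a b \<or> piA f = F3 al de a b \<circ> sw3"
    using C3[OF piA_aut[OF f]] by blast
  obtain l where lf: "l = inn (a, b, 0, 0) \<circ> dg al de \<or> l = inn (a, b, 0, 0) \<circ> dg al de \<circ> sw"
    and pl: "piA l = piA f"
    using c piA_L1 piA_L2 by metis
  have l: "l \<in> lie_auts sol4_mult"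
    using lf ad by (auto intro!: lie_auts_comp inn_aut dg_aut sw_aut)
  obtain l' where l': "l' \<in> lie_auts sol4_mult" "l' \<circ> l = id" "l \<circ> l' = id"
    using lie_auts_inv_ex[OF l] by blast
  have fl: "f \<circ> l' \<in> lie_auts sol4_mult" by (rule lie_auts_comp[OF f l'(1)])
  have "piA (f \<circ> l') = piA f \<circ> piA l'" by (rule piA_comp[OF f l'(1)])
  also have "\<dots> = piA (l \<circ> l')" by (simp add: piA_comp[OF l l'(1)] pl)
  also have "\<dots> = id" by (simp add: l'(3) piA_id)
  finally have "f \<circ> l' \<in> aut_kernel" using fl by (simp add: kernel_iff)
  then obtain k where k: "f \<circ> l' = khat k" using kernel_khat by blast
  have "f = (f \<circ> l') \<circ> l" by (simp add: o_assoc[symmetric] l'(2))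
  then have "f = khat k \<circ> l" by (simp add: k)
  then show ?thesis using ad lf by blast
qed

section \<open>Conjugation by automorphisms\<close>

lemma s4_right_inv: "sol4_mult g (s4inv g) = (0, 0, 0, 0)"
  by (cases g) (simp add: s4m s4inv_def exp_minus field_simps)

lemma s4_inv_unique: "sol4_mult a b = (0, 0, 0, 0) \<Longrightarrow> b = s4inv a"
proof -
  assume h: "sol4_mult a b = (0, 0, 0, 0)"
  obtain x y z u where a: "a = (x, y, z, u)" by (metis prod.exhaust)
  obtain x' y' z' u' where b: "b = (x', y', z', u')" by (metis prod.exhaust)
  have e: "x + exp (- u) * x' = 0" "y + exp u * y' = 0" "z + z' + exp u * x * y' = 0" "u + u' = 0"
    using h by (simp_all add: a b s4m)
  have u': "u' = - u" using e(4) by simp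
  have x': "x' = - (exp u * x)"
  proof -
    have "exp u * (x + exp (- u) * x') = 0" using e(1) by simp
    then show ?thesis by (simp add: algebra_simps exp_minus)
  qed
  have y': "y' = - (exp (- u) * y)"
  proof -
    have "exp (- u) * (y + exp u * y') = 0" using e(2) by simp
    then show ?thesis by (simp add: algebra_simps exp_minus)
  qed
  have z': "z' = x * y - z"
    using e(3) by (simp add: y' algebra_simps exp_minus)
  show ?thesis by (simp add: b a s4inv_def u' x' y' z')
qed

lemma aut_one:
  assumes f: "f \<in> lie_auts sol4_mult"
  shows "f (0, 0, 0, 0) = (0, 0, 0, 0)"
proof -
  obtain a b c d where abcd: "f (0,0,0,0) = (a, b, c, d)" by (metis prod.exhaust)
  have m: "sol4_mult (0,0,0,0) (0,0,0,0) = (0::real,0::real,0::real,0::real)" by (simp add: s4m)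
  have "f (0,0,0,0) = sol4_mult (f (0,0,0,0)) (f (0,0,0,0))"
    using lie_autsD(1)[OF f, of "(0,0,0,0)" "(0,0,0,0)"] unfolding m .
  then have E: "(a,b,c,d) = (a + exp (- d) * a, b + exp d * b, c + c + exp d * a * b, d + d)"
    by (simp only: abcd s4m)
  then have E2: "a = a + exp (- d) * a" "b = b + exp d * b" "c = c + c + exp d * a * b" "d = d + d"
    by (simp_all only: prod.inject)
  then have "d = 0" by linarith
  with E2 have "a = 0 \<and> b = 0" by simp
  with E2 have "c = 0" by simp
  then show ?thesis using abcd \<open>d = 0\<close> \<open>a = 0 \<and> b = 0\<close> by simp
qed

lemma aut_inn:
  assumes f: "f \<in> lie_auts sol4_mult"
  shows "f \<circ> inn g = inn (f g) \<circ> f"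
proof
  fix p
  have fi: "f (s4inv g) = s4inv (f g)"
  proof (rule s4_inv_unique)
    show "sol4_mult (f g) (f (s4inv g)) = (0, 0, 0, 0)"
      using lie_autsD(1)[OF f, of g "s4inv g", symmetric] by (simp add: s4_right_inv aut_one[OF f])
  qed
  show "(f \<circ> inn g) p = (inn (f g) \<circ> f) p"
    by (simp add: inn_def lie_autsD(1)[OF f] fi)
qed

lemma inn_z: "inn (p, q, r, v) = inn (p, q, 0, v)"
  by (auto simp: fun_eq_iff inn_formula)

lemma khat_inn: "khat k \<circ> inn g = inn g \<circ> khat k"
proof -
  obtain p q r v where g: "g = (p, q, r, v)" by (metis prod.exhaust)
  have "khat k \<circ> inn g = inn (khat k g) \<circ> khat k" by (rule aut_inn[OF khat_aut])
  also have "inn (khat k g) = inn g" by (simp add: g khat_def inn_z[of _ _ "r + k * v"] inn_z[of _ _ r])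
  finally show ?thesis .
qed

lemma inn_lift_hom: "inn (lift3 (sol3_mult a b)) = inn (lift3 a) \<circ> inn (lift3 b)"
proof -
  obtain x y u where a: "a = ((x, y), u)" by (metis prod.exhaust)
  obtain x' y' u' where b: "b = ((x', y'), u')" by (metis prod.exhaust)
  have "inn (lift3 a) \<circ> inn (lift3 b) = inn (sol4_mult (lift3 a) (lift3 b))"
    by (simp add: fun_eq_iff inn_inn)
  also have "\<dots> = inn (lift3 (sol3_mult a b))"
    by (simp add: a b lift_t s4m s3m inn_z[of _ _ "exp u * x * y'"])
  finally show ?thesis by simp
qed

lemma inn_proj: "inn g = inn (lift3 (sol4_proj g))"
proof -
  obtain p q r v where g: "g = (p, q, r, v)" by (metis prod.exhaust)
  show ?thesis by (simp add: g proj_t lift_t inn_z[of p q r v])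
qed



section \<open>Small groups\<close>

lemma group_R_add: "group R_add"
  by (rule groupI) (auto simp: R_add_def intro: exI[of _ "- x" for x])

lemma group_R_pos: "group R_pos"
proof (rule groupI)
  fix x assume "x \<in> carrier R_pos"
  then show "\<exists>y\<in>carrier R_pos. y \<otimes>\<^bsub>R_pos\<^esub> x = \<one>\<^bsub>R_pos\<^esub>"
    by (auto simp: R_pos_def intro!: exI[of _ "1 / x"])
qed (auto simp: R_pos_def)

lemma group_Sol3: "group Sol3"
proof (rule groupI)
  fix x y z :: r3
  show "x \<otimes>\<^bsub>Sol3\<^esub> y \<otimes>\<^bsub>Sol3\<^esub> z = x \<otimes>\<^bsub>Sol3\<^esub> (y \<otimes>\<^bsub>Sol3\<^esub> z)"
  proof -
    obtain a b u where x: "x = ((a, b), u)" by (metis prod.exhaust)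
    obtain a' b' u' where y: "y = ((a', b'), u')" by (metis prod.exhaust)
    obtain a'' b'' u'' where z: "z = ((a'', b''), u'')" by (metis prod.exhaust)
    show ?thesis by (simp add: x y z Sol3_def s3m algebra_simps flip: exp_add)
  qed
next
  fix x :: r3
  obtain a b u where x: "x = ((a, b), u)" by (metis prod.exhaust)
  show "\<one>\<^bsub>Sol3\<^esub> \<otimes>\<^bsub>Sol3\<^esub> x = x" by (simp add: x Sol3_def s3m)
next
  fix x :: r3
  obtain a b u where x: "x = ((a, b), u)" by (metis prod.exhaust)
  show "\<exists>y\<in>carrier Sol3. y \<otimes>\<^bsub>Sol3\<^esub> x = \<one>\<^bsub>Sol3\<^esub>"
    by (rule bexI[of _ "((- (exp u * a), - (exp (- u) * b)), - u)"])
      (auto simp: Sol3_def s3m x exp_minus field_simps)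
qed (auto simp: Sol3_def)

definition diagM :: "real \<Rightarrow> real \<Rightarrow> real^2^2" where
  "diagM s t = vector [vector [s, 0], vector [0, t]]"
definition antiM :: "real \<Rightarrow> real \<Rightarrow> real^2^2" where
  "antiM s t = vector [vector [0, s], vector [t, 0]]"

lemma D4_carrier: "carrier D4 = {A. \<exists>s t. s \<in> {-1, 1} \<and> t \<in> {-1, 1} \<and> (A = diagM s t \<or> A = antiM s t)}"
  by (simp add: D4_def diagM_def antiM_def)

lemma diagM_entries [simp]: "diagM s t $ 1 $ 1 = s" "diagM s t $ 1 $ 2 = 0" "diagM s t $ 2 $ 1 = 0" "diagM s t $ 2 $ 2 = t"
  by (simp_all add: diagM_def)
lemma antiM_entries [simp]: "antiM s t $ 1 $ 1 = 0" "antiM s t $ 1 $ 2 = s" "antiM s t $ 2 $ 1 = t" "antiM s t $ 2 $ 2 = 0"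
  by (simp_all add: antiM_def)

lemma M_eq: "(A :: real^2^2) = B \<longleftrightarrow> A$1$1 = B$1$1 \<and> A$1$2 = B$1$2 \<and> A$2$1 = B$2$1 \<and> A$2$2 = B$2$2"
  by (auto simp: vec_eq_iff forall_2)

lemma mmult_entries: "((A :: real^2^2) ** B) $ i $ j = A$i$1 * B$1$j + A$i$2 * B$2$j"
  by (simp add: matrix_matrix_mult_def sum_2)

lemma dd: "diagM s t ** diagM s' t' = diagM (s * s') (t * t')"
  by (simp add: M_eq mmult_entries)
lemma da: "diagM s t ** antiM s' t' = antiM (s * s') (t * t')"
  by (simp add: M_eq mmult_entries)
lemma ad: "antiM s t ** diagM s' t' = antiM (s * t') (t * s')"
  by (simp add: M_eq mmult_entries)
lemma aa: "antiM s t ** antiM s' t' = diagM (s * t') (t * s')"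
  by (simp add: M_eq mmult_entries)
lemma mat1_diag: "mat 1 = diagM 1 1"
  by (simp add: M_eq mat_def)
lemma diag_anti_ne: "s \<noteq> 0 \<Longrightarrow> diagM a b \<noteq> antiM s t"
  by (simp add: M_eq)

lemma sgn_cases: "s \<in> {-1, 1::real} \<Longrightarrow> s * s = 1"
  by auto

lemma diag_in: "s \<in> {-1, 1} \<Longrightarrow> t \<in> {-1, 1} \<Longrightarrow> diagM s t \<in> carrier D4"
  unfolding D4_carrier by blast
lemma anti_in: "s \<in> {-1, 1} \<Longrightarrow> t \<in> {-1, 1} \<Longrightarrow> antiM s t \<in> carrier D4"
  unfolding D4_carrier by blast

lemma group_D4: "group D4"
proof (rule groupI)
  fix x y assume x: "x \<in> carrier D4" and y: "y \<in> carrier D4"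
  from x obtain s t where st: "s \<in> {-1,1}" "t \<in> {-1,1}" "x = diagM s t \<or> x = antiM s t"
    by (auto simp: D4_carrier)
  from y obtain s' t' where st': "s' \<in> {-1,1}" "t' \<in> {-1,1}" "y = diagM s' t' \<or> y = antiM s' t'"
    by (auto simp: D4_carrier)
  have pr: "s * s' \<in> {-1,1::real}" "t * t' \<in> {-1,1::real}" "s * t' \<in> {-1,1::real}" "t * s' \<in> {-1,1::real}"
    using st st' by auto
  have m: "\<And>a b. a \<otimes>\<^bsub>D4\<^esub> b = a ** b" by (simp add: D4_def)
  show "x \<otimes>\<^bsub>D4\<^esub> y \<in> carrier D4"
    using st(3) st'(3)
    by (elim disjE) (simp_all only: m dd da ad aa diag_in anti_in pr)
next
  show "\<one>\<^bsub>D4\<^esub> \<in> carrier D4" using diag_in[of 1 1] by (simp add: D4_def mat1_diag)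
next
  fix x y z show "x \<otimes>\<^bsub>D4\<^esub> y \<otimes>\<^bsub>D4\<^esub> z = x \<otimes>\<^bsub>D4\<^esub> (y \<otimes>\<^bsub>D4\<^esub> z)"
    by (simp add: D4_def matrix_mul_assoc)
next
  fix x show "\<one>\<^bsub>D4\<^esub> \<otimes>\<^bsub>D4\<^esub> x = x" by (simp add: D4_def)
next
  fix x assume x: "x \<in> carrier D4"
  from x obtain s t where st: "s \<in> {-1,1}" "t \<in> {-1,1}" "x = diagM s t \<or> x = antiM s t"
    by (auto simp: D4_carrier)
  show "\<exists>y\<in>carrier D4. y \<otimes>\<^bsub>D4\<^esub> x = \<one>\<^bsub>D4\<^esub>"
  proof (cases "x = diagM s t")
    case True
    have "diagM s t ** diagM s t = mat 1" using st by (simp add: dd mat1_diag sgn_cases)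
    moreover have mem: "diagM s t \<in> carrier D4" using st by (simp add: diag_in)
    ultimately show ?thesis using True
      by (intro bexI[OF _ mem]) (simp add: D4_def)
  next
    case False
    then have "x = antiM s t" using st by simp
    moreover have "antiM t s ** antiM s t = mat 1" using st by (simp add: aa mat1_diag sgn_cases mult.commute)
    moreover have mem: "antiM t s \<in> carrier D4" using st by (simp add: anti_in)
    ultimately show ?thesis
      by (intro bexI[OF _ mem]) (simp add: D4_def)
  qed
qed


section \<open>Subgroups of Aut(Sol4)\<close>

lemma Aut_inv_eq:
  assumes "f \<in> lie_auts m" "f' \<in> lie_auts m" "f' \<circ> f = id"
  shows "inv\<^bsub>Aut_group m\<^esub> f = f'"
proof -
  interpret group "Aut_group m" by (rule group_Aut)
  show ?thesis by (rule inv_equality) (use assms in \<open>simp_all add: Aut_group_def\<close>)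
qed

lemma subgroup_from:
  assumes sub: "S \<subseteq> lie_auts m" and one: "id \<in> S"
    and comp: "\<And>f g. f \<in> S \<Longrightarrow> g \<in> S \<Longrightarrow> f \<circ> g \<in> S"
    and inv: "\<And>f. f \<in> S \<Longrightarrow> \<exists>f' \<in> S. f' \<circ> f = id"
  shows "subgroup S (Aut_group m)"
proof -
  interpret group "Aut_group m" by (rule group_Aut)
  show ?thesis
  proof (rule subgroupI)
    show "S \<subseteq> carrier (Aut_group m)" using sub by (simp add: Aut_group_def)
    show "S \<noteq> {}" using one by blast
    fix a b assume "a \<in> S" "b \<in> S"
    then show "a \<otimes>\<^bsub>Aut_group m\<^esub> b \<in> S" using comp by (simp add: Aut_group_def)
  next
    fix a assume a: "a \<in> S"
    then obtain a' where a': "a' \<in> S" "a' \<circ> a = id" using inv by blast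
    have "inv\<^bsub>Aut_group m\<^esub> a = a'" by (rule Aut_inv_eq) (use a a' sub in auto)
    then show "inv\<^bsub>Aut_group m\<^esub> a \<in> S" using a' by simp
  qed
qed

lemma s4_left_inv: "sol4_mult (s4inv g) g = (0, 0, 0, 0)"
  by (cases g) (simp add: s4m s4inv_def exp_minus field_simps)

lemma khat_inn_pt: "khat k (inn g p) = inn g (khat k p)"
  using fun_cong[OF khat_inn, of k g p] by simp

lemma aut_inn_pt: "f \<in> lie_auts sol4_mult \<Longrightarrow> f (inn g p) = inn (f g) (f p)"
  using fun_cong[OF aut_inn, of f g p] by simp

definition Hset :: "(r4 \<Rightarrow> r4) set" where
  "Hset = {dg a d | a d. a \<noteq> 0 \<and> d \<noteq> 0} \<union> {dg a d \<circ> sw | a d. a \<noteq> 0 \<and> d \<noteq> 0}"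

lemma dg_in: "a \<noteq> 0 \<Longrightarrow> d \<noteq> 0 \<Longrightarrow> dg a d \<in> Hset"
  unfolding Hset_def by blast
lemma dgsw_in: "a \<noteq> 0 \<Longrightarrow> d \<noteq> 0 \<Longrightarrow> dg a d \<circ> sw \<in> Hset"
  unfolding Hset_def by blast

lemma Hset_aut: "h \<in> Hset \<Longrightarrow> h \<in> lie_auts sol4_mult"
  by (auto simp: Hset_def intro!: lie_auts_comp dg_aut sw_aut)

lemma comp1: "dg a d \<circ> dg a' d' = dg (a * a') (d * d')"
  by (simp add: fun_eq_iff dg_dg)
lemma comp2: "dg a d \<circ> (dg a' d' \<circ> sw) = dg (a * a') (d * d') \<circ> sw"
  by (simp add: fun_eq_iff dg_dg)
lemma comp3: "(dg a d \<circ> sw) \<circ> dg a' d' = dg (a * d') (d * a') \<circ> sw"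
  by (simp add: fun_eq_iff dg_dg dg_sw)
lemma comp4: "(dg a d \<circ> sw) \<circ> (dg a' d' \<circ> sw) = dg (a * d') (d * a')"
  by (simp add: fun_eq_iff dg_dg dg_sw sw_sw)

lemma Hset_cases:
  assumes "h \<in> Hset"
  obtains a d where "a \<noteq> 0" "d \<noteq> 0" "h = dg a d" | a d where "a \<noteq> 0" "d \<noteq> 0" "h = dg a d \<circ> sw"
  using assms unfolding Hset_def by blast

lemma Hset_comp: "h \<in> Hset \<Longrightarrow> h' \<in> Hset \<Longrightarrow> h \<circ> h' \<in> Hset"
  by (erule Hset_cases; erule Hset_cases)
    (simp_all only: comp1 comp2 comp3 comp4 dg_in dgsw_in mult_eq_0_iff de_Morgan_disj simp_thms)

lemma Hset_inv: "h \<in> Hset \<Longrightarrow> \<exists>h' \<in> Hset. h' \<circ> h = id"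
proof (erule Hset_cases)
  fix a d assume ad: "a \<noteq> 0" "d \<noteq> 0" "h = dg a d"
  show ?thesis
    by (rule bexI[of _ "dg (1/a) (1/d)"]) (use ad in \<open>simp_all add: comp1 dg_1 dg_in\<close>)
next
  fix a d assume ad: "a \<noteq> 0" "d \<noteq> 0" "h = dg a d \<circ> sw"
  show ?thesis
    by (rule bexI[of _ "dg (1/d) (1/a) \<circ> sw"]) (use ad in \<open>simp_all add: comp4 dg_1 dgsw_in\<close>)
qed

definition Lset :: "(r4 \<Rightarrow> r4) set" where
  "Lset = {inn g \<circ> h | g h. h \<in> Hset}"

lemma LsetI: "h \<in> Hset \<Longrightarrow> inn g \<circ> h \<in> Lset"
  unfolding Lset_def by blast
lemma LsetE: "f \<in> Lset \<Longrightarrow> (\<And>g h. f = inn g \<circ> h \<Longrightarrow> h \<in> Hset \<Longrightarrow> P) \<Longrightarrow> P"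
  unfolding Lset_def by blast

lemma Lset_aut: "f \<in> Lset \<Longrightarrow> f \<in> lie_auts sol4_mult"
  by (erule LsetE) (simp add: lie_auts_comp inn_aut Hset_aut)

lemma Lset_comp:
  assumes "f \<in> Lset" "f' \<in> Lset"
  shows "f \<circ> f' \<in> Lset"
proof -
  obtain g h where f: "f = inn g \<circ> h" "h \<in> Hset" using assms(1) by (rule LsetE)
  obtain g' h' where f': "f' = inn g' \<circ> h'" "h' \<in> Hset" using assms(2) by (rule LsetE)
  have "f \<circ> f' = inn (sol4_mult g (h g')) \<circ> (h \<circ> h')"
    by (simp add: fun_eq_iff f f' aut_inn_pt[OF Hset_aut[OF f(2)]] inn_inn)
  then show ?thesis using LsetI[OF Hset_comp[OF f(2) f'(2)]] by simp
qed

lemma Lset_inv: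
  assumes "f \<in> Lset"
  shows "\<exists>f' \<in> Lset. f' \<circ> f = id"
proof -
  obtain g h where f: "f = inn g \<circ> h" "h \<in> Hset" using assms(1) by (rule LsetE)
  obtain h' where h': "h' \<in> Hset" "h' \<circ> h = id" using Hset_inv[OF f(2)] by blast
  have ha: "h' \<in> lie_auts sol4_mult" by (rule Hset_aut[OF h'(1)])
  have hh: "h' (h p) = p" for p using fun_cong[OF h'(2), of p] by simp
  have e: "sol4_mult (h' (s4inv g)) (h' g) = (0,0,0,0)"
    using lie_autsD(1)[OF ha, of "s4inv g" g, symmetric] by (simp add: s4_left_inv aut_one[OF ha])
  have "(inn (h' (s4inv g)) \<circ> h') \<circ> f = id"
    by (simp add: fun_eq_iff f aut_inn_pt[OF ha] hh inn_inn e inn_one)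
  moreover have "inn (h' (s4inv g)) \<circ> h' \<in> Lset" using h'(1) by (rule LsetI)
  ultimately show ?thesis by blast
qed

lemma id_Lset: "id \<in> Lset"
proof -
  have "id = inn (0,0,0,0) \<circ> dg 1 1" by (simp add: inn_one dg_1)
  then show ?thesis using LsetI[OF dg_in[of 1 1], of "(0,0,0,0)"] by simp
qed

lemma Lset_sub: "subgroup Lset Aut_Sol4"
  by (rule subgroup_from) (auto intro: Lset_aut id_Lset Lset_comp Lset_inv)

definition Nset :: "(r4 \<Rightarrow> r4) set" where
  "Nset = {khat k \<circ> inn g | k g. True}"

lemma NsetI: "khat k \<circ> inn g \<in> Nset"
  unfolding Nset_def by blast
lemma NsetE: "f \<in> Nset \<Longrightarrow> (\<And>k g. f = khat k \<circ> inn g \<Longrightarrow> P) \<Longrightarrow> P"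
  unfolding Nset_def by blast

lemma Nset_aut: "f \<in> Nset \<Longrightarrow> f \<in> lie_auts sol4_mult"
  by (erule NsetE) (simp add: lie_auts_comp inn_aut khat_aut)

lemma Nset_comp_eq: "(khat k \<circ> inn g) \<circ> (khat k' \<circ> inn g') = khat (k + k') \<circ> inn (sol4_mult g g')"
  by (simp add: fun_eq_iff khat_inn_pt khat_khat inn_inn)

lemma Nset_sub: "subgroup Nset Aut_Sol4"
proof (rule subgroup_from)
  show "Nset \<subseteq> lie_auts sol4_mult" using Nset_aut by blast
  have "id = khat 0 \<circ> inn (0,0,0,0)" by (simp add: khat_0 inn_one)
  then show "id \<in> Nset" using NsetI by metis
  fix f g assume "f \<in> Nset" "g \<in> Nset"
  then show "f \<circ> g \<in> Nset" by (elim NsetE) (simp add: Nset_comp_eq NsetI)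
next
  fix f assume "f \<in> Nset"
  then obtain k g where f: "f = khat k \<circ> inn g" by (rule NsetE)
  have "(khat (- k) \<circ> inn (s4inv g)) \<circ> f = id"
    by (simp add: f Nset_comp_eq s4_left_inv inn_one khat_0)
  moreover have "khat (- k) \<circ> inn (s4inv g) \<in> Nset" by (rule NsetI)
  ultimately show "\<exists>f' \<in> Nset. f' \<circ> f = id" by blast
qed

lemma K_sub: "subgroup aut_kernel Aut_Sol4"
proof (rule subgroup_from)
  show "aut_kernel \<subseteq> lie_auts sol4_mult" by (auto simp: kernel_iff)
  show "id \<in> aut_kernel" using khat_kernel[of 0] by (simp add: khat_0)
  fix f g assume "f \<in> aut_kernel" "g \<in> aut_kernel"
  then show "f \<circ> g \<in> aut_kernel" by (auto simp: kernel_iff piA_comp lie_auts_comp)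
next
  fix f assume fk: "f \<in> aut_kernel"
  then have f: "f \<in> lie_auts sol4_mult" by (simp add: kernel_iff)
  obtain f' where f': "f' \<in> lie_auts sol4_mult" "f' \<circ> f = id" using lie_auts_inv_ex[OF f] by blast
  have "piA f' = piA f' \<circ> piA f" using fk by (simp add: kernel_iff)
  also have "\<dots> = id" by (simp add: piA_comp[OF f' (1) f, symmetric] f'(2) piA_id)
  finally show "\<exists>f' \<in> aut_kernel. f' \<circ> f = id" using f' by (auto simp: kernel_iff)
qed

lemma K_conj:
  assumes x: "x \<in> lie_auts sol4_mult" and h: "h \<in> aut_kernel"
  shows "x \<circ> h \<circ> inv\<^bsub>Aut_Sol4\<^esub> x \<in> aut_kernel"
proof -
  note xi = Aut_inv[OF x]
  have ha: "h \<in> lie_auts sol4_mult" and ph: "piA h = id" using h by (auto simp: kernel_iff)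
  have "piA (x \<circ> h \<circ> inv\<^bsub>Aut_Sol4\<^esub> x) = piA x \<circ> piA h \<circ> piA (inv\<^bsub>Aut_Sol4\<^esub> x)"
    by (simp add: piA_comp lie_auts_comp x ha xi(1))
  also have "\<dots> = piA (x \<circ> inv\<^bsub>Aut_Sol4\<^esub> x)" by (simp add: ph piA_comp x xi(1))
  also have "\<dots> = id" by (simp add: xi(3) piA_id)
  finally show ?thesis by (simp add: kernel_iff lie_auts_comp x ha xi(1))
qed

lemma Aut4_simps: "carrier Aut_Sol4 = lie_auts sol4_mult" "x \<otimes>\<^bsub>Aut_Sol4\<^esub> y = x \<circ> y"
  "\<one>\<^bsub>Aut_Sol4\<^esub> = id"
  by (simp_all add: Aut_group_def)

lemma K_normal: "aut_kernel \<lhd> Aut_Sol4"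
proof -
  interpret group Aut_Sol4 by (rule group_Aut)
  show ?thesis
    by (subst normal_inv_iff) (auto simp: K_sub K_conj Aut4_simps)
qed

lemma N_normal: "Nset \<lhd> Aut_Sol4"
proof -
  interpret group Aut_Sol4 by (rule group_Aut)
  have conj: "x \<circ> n \<circ> inv\<^bsub>Aut_Sol4\<^esub> x \<in> Nset" if x: "x \<in> lie_auts sol4_mult" and n: "n \<in> Nset" for x n
  proof -
    note xi = Aut_inv[OF x]
    obtain k g where nf: "n = khat k \<circ> inn g" using n by (rule NsetE)
    have "x \<circ> khat k \<circ> inv\<^bsub>Aut_Sol4\<^esub> x \<in> aut_kernel" by (rule K_conj[OF x khat_kernel])
    then obtain k' where k': "x \<circ> khat k \<circ> inv\<^bsub>Aut_Sol4\<^esub> x = khat k'" using kernel_khat by blast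
    have xx: "(inv\<^bsub>Aut_Sol4\<^esub> x) (x p) = p" for p using fun_cong[OF xi(2), of p] by simp
    have e1: "x \<circ> n \<circ> inv\<^bsub>Aut_Sol4\<^esub> x = (x \<circ> khat k \<circ> inv\<^bsub>Aut_Sol4\<^esub> x) \<circ> (x \<circ> inn g \<circ> inv\<^bsub>Aut_Sol4\<^esub> x)"
      by (simp add: fun_eq_iff nf xx)
    have e2: "x \<circ> inn g \<circ> inv\<^bsub>Aut_Sol4\<^esub> x = inn (x g)"
      by (simp add: aut_inn[OF x] o_assoc[symmetric] xi(3))
    have "x \<circ> n \<circ> inv\<^bsub>Aut_Sol4\<^esub> x = khat k' \<circ> inn (x g)"
      by (simp only: e1 e2 k')
    then show ?thesis by (simp add: NsetI)
  qed
  show ?thesis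
    by (subst normal_inv_iff) (auto simp: Nset_sub conj Aut4_simps)
qed


section \<open>The complement R+ x D4\<close>

definition hmap :: "real \<Rightarrow> real^2^2 \<Rightarrow> r4 \<Rightarrow> r4" where
  "hmap r A = (if A$1$2 = 0 then dg (r * A$1$1) (r * A$2$2) else dg (r * A$1$2) (r * A$2$1) \<circ> sw)"

lemma hmap_diag: "hmap r (diagM s t) = dg (r * s) (r * t)"
  by (simp add: hmap_def)
lemma hmap_anti: "s \<noteq> 0 \<Longrightarrow> hmap r (antiM s t) = dg (r * s) (r * t) \<circ> sw"
  by (simp add: hmap_def)

lemma D4_cases:
  assumes "A \<in> carrier D4"
  obtains s t where "s \<in> {-1, 1}" "t \<in> {-1, 1}" "A = diagM s t"
    | s t where "s \<in> {-1, 1}" "t \<in> {-1, 1}" "A = antiM s t"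
  using assms unfolding D4_carrier by blast

lemma pm_ne0: "s \<in> {-1, 1::real} \<Longrightarrow> s \<noteq> 0" by auto
lemma pm_mult: "s \<in> {-1, 1::real} \<Longrightarrow> t \<in> {-1, 1} \<Longrightarrow> s * t \<in> {-1, 1}" by auto

lemma hmap_aut:
  assumes "r > 0" "A \<in> carrier D4"
  shows "hmap r A \<in> lie_auts sol4_mult"
  using assms(2)
proof (cases rule: D4_cases)
  case (1 s t) then show ?thesis using assms(1) by (simp add: hmap_diag dg_aut pm_ne0)
next
  case (2 s t) then show ?thesis using assms(1)
    by (simp add: hmap_anti dg_aut pm_ne0 lie_auts_comp sw_aut)
qed

lemma hmap_hom:
  assumes "A \<in> carrier D4" "B \<in> carrier D4"
  shows "hmap (r * r') (A ** B) = hmap r A \<circ> hmap r' B"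
  using assms(1)
proof (cases rule: D4_cases)
  case (1 s t)
  from assms(2) show ?thesis
  proof (cases rule: D4_cases)
    case (1 s' t') then show ?thesis using \<open>A = diagM s t\<close>
      by (simp add: dd hmap_diag comp1 algebra_simps)
  next
    case (2 s' t') then show ?thesis using \<open>A = diagM s t\<close> \<open>s \<in> _\<close>
      by (simp add: da hmap_diag hmap_anti comp2 pm_ne0 algebra_simps)
  qed
next
  case (2 s t)
  from assms(2) show ?thesis
  proof (cases rule: D4_cases)
    case (1 s' t') then show ?thesis using \<open>A = antiM s t\<close> \<open>s \<in> _\<close> \<open>t \<in> _\<close>
      by (simp add: ad hmap_diag hmap_anti comp3 pm_ne0 algebra_simps)
  next
    case (2 s' t') then show ?thesis using \<open>A = antiM s t\<close> \<open>s \<in> _\<close> \<open>t \<in> _\<close>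
      by (simp add: aa hmap_diag hmap_anti comp4 pm_ne0 algebra_simps)
  qed
qed

lemma rs_inj:
  assumes "(r::real) > 0" "r' > 0" "s \<in> {-1, 1}" "s' \<in> {-1, 1}" "r * s = r' * s'"
  shows "r = r' \<and> s = s'"
  using assms by auto

lemma hmap_inj:
  assumes r: "r > 0" "r' > 0" and A: "A \<in> carrier D4" "B \<in> carrier D4"
    and eq: "hmap r A = hmap r' B"
  shows "r = r' \<and> A = B"
proof -
  have e1: "hmap r A (1,0,0,0) = hmap r' B (1,0,0,0)" "hmap r A (0,1,0,0) = hmap r' B (0,1,0,0)"
    "hmap r A (0,0,0,1) = hmap r' B (0,0,0,1)" using eq by simp_all
  from A(1) show ?thesis
  proof (cases rule: D4_cases)
    case (1 s t)
    from A(2) show ?thesis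
    proof (cases rule: D4_cases)
      case (1 s' t')
      have "r * s = r' * s'" "r * t = r' * t'"
        using e1 \<open>A = diagM s t\<close> \<open>B = diagM s' t'\<close> by (simp_all add: hmap_diag dg_def)
      then show ?thesis using rs_inj[OF r \<open>s \<in> _\<close> \<open>s' \<in> _\<close>] rs_inj[OF r \<open>t \<in> _\<close> \<open>t' \<in> _\<close>]
        \<open>A = diagM s t\<close> \<open>B = diagM s' t'\<close> by simp
    next
      case (2 s' t')
      then show ?thesis using e1(3) \<open>A = diagM s t\<close>
        by (simp add: hmap_diag hmap_anti pm_ne0 dg_def sw_def)
    qed
  next
    case (2 s t)
    from A(2) show ?thesis
    proof (cases rule: D4_cases)
      case (1 s' t')
      then show ?thesis using e1(3) \<open>A = antiM s t\<close> \<open>s \<in> _\<close>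
        by (simp add: hmap_diag hmap_anti pm_ne0 dg_def sw_def)
    next
      case (2 s' t')
      have "r * t = r' * t'" "r * s = r' * s'"
        using e1 \<open>A = antiM s t\<close> \<open>B = antiM s' t'\<close> \<open>s \<in> _\<close> \<open>s' \<in> _\<close>
        by (simp_all add: hmap_anti pm_ne0 dg_def sw_def)
      then show ?thesis using rs_inj[OF r \<open>s \<in> _\<close> \<open>s' \<in> _\<close>] rs_inj[OF r \<open>t \<in> _\<close> \<open>t' \<in> _\<close>]
        \<open>A = antiM s t\<close> \<open>B = antiM s' t'\<close> by simp
    qed
  qed
qed

definition Psi :: "real \<times> (real^2^2) \<Rightarrow> r4 \<Rightarrow> r4" where
  "Psi p = hmap (fst p) (snd p)"

definition Hpos :: "(r4 \<Rightarrow> r4) set" where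
  "Hpos = Psi ` carrier (R_pos \<times>\<times> D4)"

lemma Psi_hom: "Psi \<in> hom (R_pos \<times>\<times> D4) Aut_Sol4"
proof (rule homI)
  fix x assume "x \<in> carrier (R_pos \<times>\<times> D4)"
  then show "Psi x \<in> carrier Aut_Sol4"
    by (auto simp: Psi_def Aut4_simps R_pos_def intro!: hmap_aut)
next
  fix x y assume "x \<in> carrier (R_pos \<times>\<times> D4)" "y \<in> carrier (R_pos \<times>\<times> D4)"
  then show "Psi (x \<otimes>\<^bsub>R_pos \<times>\<times> D4\<^esub> y) = Psi x \<otimes>\<^bsub>Aut_Sol4\<^esub> Psi y"
    by (cases x; cases y) (simp add: Psi_def Aut4_simps R_pos_def D4_def hmap_hom[simplified D4_def])
qed

lemma H_sub: "subgroup Hpos Aut_Sol4"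
proof -
  have "group_hom (R_pos \<times>\<times> D4) Aut_Sol4 Psi"
    by (simp add: group_hom_def group_hom_axioms_def DirProd_group group_R_pos group_D4 group_Aut Psi_hom)
  then show ?thesis unfolding Hpos_def by (rule group_hom.img_is_subgroup)
qed

lemma H_iso: "Aut_Sol4\<lparr>carrier := Hpos\<rparr> \<cong> R_pos \<times>\<times> D4"
proof -
  have "Psi \<in> iso (R_pos \<times>\<times> D4) (Aut_Sol4\<lparr>carrier := Hpos\<rparr>)"
  proof (rule isoI)
    show "Psi \<in> hom (R_pos \<times>\<times> D4) (Aut_Sol4\<lparr>carrier := Hpos\<rparr>)"
      using Psi_hom by (auto simp: hom_def Hpos_def Aut_group_def)
    show "bij_betw Psi (carrier (R_pos \<times>\<times> D4)) (carrier (Aut_Sol4\<lparr>carrier := Hpos\<rparr>))"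
      unfolding bij_betw_def
    proof
      show "inj_on Psi (carrier (R_pos \<times>\<times> D4))"
        by (auto simp: inj_on_def Psi_def R_pos_def dest: hmap_inj)
      show "Psi ` carrier (R_pos \<times>\<times> D4) = carrier (Aut_Sol4\<lparr>carrier := Hpos\<rparr>)"
        by (simp add: Hpos_def)
    qed
  qed
  then have "R_pos \<times>\<times> D4 \<cong> Aut_Sol4\<lparr>carrier := Hpos\<rparr>" by (rule is_isoI)
  then show ?thesis by (rule group.iso_sym[OF DirProd_group[OF group_R_pos group_D4]])
qed


section \<open>The normal subgroup R x Sol3\<close>

definition Phi :: "real \<times> r3 \<Rightarrow> r4 \<Rightarrow> r4" where
  "Phi p = khat (fst p) \<circ> inn (lift3 (snd p))"

lemma Phi_hom: "Phi \<in> hom (R_add \<times>\<times> Sol3) (Aut_Sol4\<lparr>carrier := Nset\<rparr>)"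
proof (rule homI)
  fix x assume "x \<in> carrier (R_add \<times>\<times> Sol3)"
  then show "Phi x \<in> carrier (Aut_Sol4\<lparr>carrier := Nset\<rparr>)" by (simp add: Phi_def NsetI)
next
  fix x y assume "x \<in> carrier (R_add \<times>\<times> Sol3)" "y \<in> carrier (R_add \<times>\<times> Sol3)"
  obtain k g where x: "x = (k, g)" by (metis prod.exhaust)
  obtain k' g' where y: "y = (k', g')" by (metis prod.exhaust)
  show "Phi (x \<otimes>\<^bsub>R_add \<times>\<times> Sol3\<^esub> y) = Phi x \<otimes>\<^bsub>Aut_Sol4\<lparr>carrier := Nset\<rparr>\<^esub> Phi y"
    by (simp add: x y Phi_def R_add_def Sol3_def Aut_group_def Nset_comp_eq inn_lift_hom fun_eq_iff inn_inn)
qed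

lemma Phi_inj:
  assumes eq: "Phi (k, ((p, q), v)) = Phi (k', ((p', q'), v'))"
  shows "k = k' \<and> p = p' \<and> q = q' \<and> v = v'"
proof -
  have e1: "Phi (k, ((p, q), v)) (0,0,0,1) = Phi (k', ((p', q'), v')) (0,0,0,1)"
    and e2: "Phi (k, ((p, q), v)) (1,0,0,0) = Phi (k', ((p', q'), v')) (1,0,0,0)"
    using eq by simp_all
  have pq: "p = p'" "q = q'"
    using arg_cong[OF e1, of fst] arg_cong[OF e1, of "\<lambda>x. fst (snd x)"]
    by (simp_all add: Phi_def lift_t inn_formula khat_def)
  have "k = k'"
    using arg_cong[OF e1, of "\<lambda>x. fst (snd (snd x))"]
    by (simp add: Phi_def lift_t inn_formula khat_def pq)
  moreover have "exp (- v) = exp (- v')" using e2 by (simp add: Phi_def lift_t inn_formula khat_def)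
  then have "v = v'" by simp
  ultimately show ?thesis using pq by simp
qed

lemma N_iso: "Aut_Sol4\<lparr>carrier := Nset\<rparr> \<cong> R_add \<times>\<times> Sol3"
proof -
  have "Phi \<in> iso (R_add \<times>\<times> Sol3) (Aut_Sol4\<lparr>carrier := Nset\<rparr>)"
  proof (rule isoI)
    show "Phi \<in> hom (R_add \<times>\<times> Sol3) (Aut_Sol4\<lparr>carrier := Nset\<rparr>)" by (rule Phi_hom)
    show "bij_betw Phi (carrier (R_add \<times>\<times> Sol3)) (carrier (Aut_Sol4\<lparr>carrier := Nset\<rparr>))"
      unfolding bij_betw_def
    proof
      show "inj_on Phi (carrier (R_add \<times>\<times> Sol3))"
      proof (rule inj_onI)
        fix x y assume "Phi x = Phi y"
        moreover obtain k p q v where "x = (k, ((p, q), v))" by (metis prod.exhaust)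
        moreover obtain k' p' q' v' where "y = (k', ((p', q'), v'))" by (metis prod.exhaust)
        ultimately show "x = y" using Phi_inj by blast
      qed
      show "Phi ` carrier (R_add \<times>\<times> Sol3) = carrier (Aut_Sol4\<lparr>carrier := Nset\<rparr>)"
      proof
        show "Phi ` carrier (R_add \<times>\<times> Sol3) \<subseteq> carrier (Aut_Sol4\<lparr>carrier := Nset\<rparr>)"
          by (auto simp: Phi_def NsetI)
        show "carrier (Aut_Sol4\<lparr>carrier := Nset\<rparr>) \<subseteq> Phi ` carrier (R_add \<times>\<times> Sol3)"
        proof
          fix f assume "f \<in> carrier (Aut_Sol4\<lparr>carrier := Nset\<rparr>)"
          then obtain k g where f: "f = khat k \<circ> inn g" by (auto elim: NsetE)
          have "f = Phi (k, sol4_proj g)" by (simp add: f Phi_def inn_proj[of g, symmetric])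
          then show "f \<in> Phi ` carrier (R_add \<times>\<times> Sol3)" by (simp add: R_add_def Sol3_def)
        qed
      qed
    qed
  qed
  then have "R_add \<times>\<times> Sol3 \<cong> Aut_Sol4\<lparr>carrier := Nset\<rparr>" by (rule is_isoI)
  then show ?thesis by (rule group.iso_sym[OF DirProd_group[OF group_R_add group_Sol3]])
qed

section \<open>Intersections\<close>

lemma one_minus_exp_ne: "1 - exp (- 1 :: real) \<noteq> 0" "1 - exp (1 :: real) \<noteq> 0"
  by simp_all

lemma KL_triv:
  assumes fk: "f \<in> aut_kernel" and fl: "f \<in> Lset"
  shows "f = id"
proof -
  obtain k where k: "f = khat k" using kernel_khat[OF fk] by blast
  obtain g h where gh: "f = inn g \<circ> h" "h \<in> Hset" using fl by (rule LsetE)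
  obtain p q r v where g: "g = (p, q, r, v)" by (metis prod.exhaust)
  have e: "khat k (0,0,0,1) = (inn g \<circ> h) (0,0,0,1)" using k gh by simp
  from gh(2) show ?thesis
  proof (cases rule: Hset_cases)
    case (1 a d)
    then have "p * (1 - exp (- 1)) = 0 \<and> q * (1 - exp 1) = 0 \<and> k = p * q * (1 - exp 1)"
      using e by (simp add: g khat_def dg_def inn_formula)
    then have "k = 0" by simp
    then show ?thesis by (simp add: k khat_0)
  next
    case (2 a d)
    then show ?thesis using e by (simp add: g khat_def dg_def sw_def inn_formula)
  qed
qed

lemma NH_triv:
  assumes fn: "f \<in> Nset" and fh: "f \<in> Hpos"
  shows "f = id"
proof -
  obtain k g where kg: "f = khat k \<circ> inn g" using fn by (rule NsetE)
  obtain p q w v where g: "g = (p, q, w, v)" by (metis prod.exhaust)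
  obtain r A where rA: "r > 0" "A \<in> carrier D4" "f = hmap r A"
    using fh by (auto simp: Hpos_def Psi_def R_pos_def)
  have e: "\<And>x. (khat k \<circ> inn g) x = hmap r A x" using kg rA(3) by simp
  from rA(2) show ?thesis
  proof (cases rule: D4_cases)
    case (1 s t)
    have e1: "(khat k \<circ> inn g) (0,0,0,1) = hmap r A (0,0,0,1)" by (rule e)
    have pq: "p = 0" "q = 0"
      using arg_cong[OF e1, of fst] arg_cong[OF e1, of "\<lambda>x. fst (snd x)"] 1
      by (simp_all add: g khat_def hmap_diag dg_def inn_formula)
    have "k = 0"
      using arg_cong[OF e1, of "\<lambda>x. fst (snd (snd x))"] 1
      by (simp add: g khat_def hmap_diag dg_def inn_formula pq)
    have ev1: "exp (- v) = r * s" using e[of "(1,0,0,0)"] 1 pq by (simp add: g khat_def hmap_diag dg_def inn_formula)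
    have ev2: "exp v = r * t" using e[of "(0,1,0,0)"] 1 pq by (simp add: g khat_def hmap_diag dg_def inn_formula)
    have rs1: "r * s > 0" using ev1 exp_gt_zero[of "- v"] by simp
    have rs2: "r * t > 0" using ev2 exp_gt_zero[of v] by simp
    have "exp (- v) * exp v = 1" by (simp add: exp_minus)
    then have rs3: "(r * s) * (r * t) = 1" using ev1 ev2 by simp
    have s1: "s = 1" using rs1 \<open>s \<in> _\<close> rA(1) by (auto simp: zero_less_mult_iff)
    have t1: "t = 1" using rs2 \<open>t \<in> _\<close> rA(1) by (auto simp: zero_less_mult_iff)
    have "r * r = 1" using rs3 s1 t1 by simp
    then have "(r - 1) * (r + 1) = 0" by (simp add: algebra_simps)
    then have "r = 1" using rA(1) by simp
    then show ?thesis using rA(3) 1 s1 t1 by (simp add: hmap_diag dg_1)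
  next
    case (2 s t)
    then show ?thesis using e[of "(0,0,0,1)"]
      by (simp add: g khat_def hmap_anti pm_ne0 dg_def sw_def inn_formula)
  qed
qed

section \<open>Products\<close>

lemma dg_split:
  assumes "al \<noteq> 0" "de \<noteq> 0"
  shows "\<exists>v r s t. r > 0 \<and> s \<in> {-1, 1} \<and> t \<in> {-1, 1} \<and> dg al de = inn (0, 0, 0, v) \<circ> dg (r * s) (r * t)"
proof -
  define r where "r = sqrt (\<bar>al\<bar> * \<bar>de\<bar>)"
  define v where "v = ln (r / \<bar>al\<bar>)"
  obtain s where s: "s = sgn al" by blast
  obtain t where t: "t = sgn de" by blast
  have r0: "r > 0" using assms by (simp add: r_def)
  have rr: "r * r = \<bar>al\<bar> * \<bar>de\<bar>" by (simp add: r_def)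
  have ev: "exp v = r / \<bar>al\<bar>" using r0 assms by (simp add: v_def)
  have emv: "exp (- v) = \<bar>al\<bar> / r" using ev by (simp add: exp_minus)
  have c1: "exp (- v) * r * s = al" using r0 by (simp add: emv s abs_mult_sgn)
  have c2: "exp v * r * t = de"
  proof -
    have "exp v * r * t = (r * r) / \<bar>al\<bar> * t" by (simp add: ev)
    also have "\<dots> = de" using assms by (simp add: rr t abs_mult_sgn)
    finally show ?thesis .
  qed
  have c3: "r * s * r * t = al * de"
  proof -
    have "al * de = (exp (- v) * r * s) * (exp v * r * t)" by (simp add: c1 c2)
    also have "\<dots> = (exp (- v) * exp v) * (r * s * r * t)" by (simp add: algebra_simps)
    also have "exp (- v) * exp v = 1" by (simp add: exp_minus)
    finally show ?thesis by simp
  qed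
  have "dg al de = inn (0, 0, 0, v) \<circ> dg (r * s) (r * t)"
  proof
    fix p :: r4
    obtain x y z u where p: "p = (x, y, z, u)" by (metis prod.exhaust)
    show "dg al de p = (inn (0, 0, 0, v) \<circ> dg (r * s) (r * t)) p"
      by (simp add: p dg_def inn_formula mult.assoc[symmetric] c1 c2 c3)
  qed
  moreover have "s \<in> {-1, 1}" "t \<in> {-1, 1}" using assms by (auto simp: s t sgn_if)
  ultimately show ?thesis using r0 by blast
qed

lemma KL_prod: "aut_kernel <#>\<^bsub>Aut_Sol4\<^esub> Lset = carrier Aut_Sol4"
proof
  show "aut_kernel <#>\<^bsub>Aut_Sol4\<^esub> Lset \<subseteq> carrier Aut_Sol4"
  proof
    fix f assume "f \<in> aut_kernel <#>\<^bsub>Aut_Sol4\<^esub> Lset"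
    then obtain a b where "a \<in> aut_kernel" "b \<in> Lset" "f = a \<circ> b" by (auto simp: set_mult_def Aut4_simps)
    then show "f \<in> carrier Aut_Sol4"
      using lie_auts_comp[of a sol4_mult b] Lset_aut[of b] by (simp add: Aut4_simps kernel_iff)
  qed
  show "carrier Aut_Sol4 \<subseteq> aut_kernel <#>\<^bsub>Aut_Sol4\<^esub> Lset"
  proof
    fix f assume "f \<in> carrier Aut_Sol4"
    then have f: "f \<in> lie_auts sol4_mult" by (simp add: Aut4_simps)
    obtain k a b al de where ad: "al \<noteq> 0" "de \<noteq> 0" and
      c: "f = khat k \<circ> (inn (a, b, 0, 0) \<circ> dg al de) \<or> f = khat k \<circ> (inn (a, b, 0, 0) \<circ> dg al de \<circ> sw)"
      using Aut4_class[OF f] by blast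
    have "\<exists>l \<in> Lset. f = khat k \<circ> l"
      using c
    proof
      assume f1: "f = khat k \<circ> (inn (a, b, 0, 0) \<circ> dg al de)"
      show ?thesis using LsetI[OF dg_in[OF ad], of "(a,b,0,0)"] f1 by blast
    next
      assume f1: "f = khat k \<circ> (inn (a, b, 0, 0) \<circ> dg al de \<circ> sw)"
      then have "f = khat k \<circ> (inn (a, b, 0, 0) \<circ> (dg al de \<circ> sw))" by (simp add: o_assoc)
      then show ?thesis using LsetI[OF dgsw_in[OF ad], of "(a,b,0,0)"] by blast
    qed
    then obtain l where "l \<in> Lset" "f = khat k \<circ> l" by blast
    then show "f \<in> aut_kernel <#>\<^bsub>Aut_Sol4\<^esub> Lset"
      unfolding set_mult_def Aut4_simps using khat_kernel by blast
  qed
qed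

lemma NH_prod: "Nset <#>\<^bsub>Aut_Sol4\<^esub> Hpos = carrier Aut_Sol4"
proof
  have "Hpos \<subseteq> lie_auts sol4_mult" using subgroup.subset[OF H_sub] by (simp add: Aut4_simps)
  then show "Nset <#>\<^bsub>Aut_Sol4\<^esub> Hpos \<subseteq> carrier Aut_Sol4"
  proof -
    assume Hs: "Hpos \<subseteq> lie_auts sol4_mult"
    show ?thesis
    proof
      fix f assume "f \<in> Nset <#>\<^bsub>Aut_Sol4\<^esub> Hpos"
      then obtain a b where "a \<in> Nset" "b \<in> Hpos" "f = a \<circ> b" by (auto simp: set_mult_def Aut4_simps)
      then show "f \<in> carrier Aut_Sol4"
        using lie_auts_comp[of a sol4_mult b] Nset_aut[of a] Hs by (auto simp: Aut4_simps)
    qed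
  qed
  show "carrier Aut_Sol4 \<subseteq> Nset <#>\<^bsub>Aut_Sol4\<^esub> Hpos"
  proof
    fix f assume "f \<in> carrier Aut_Sol4"
    then have f: "f \<in> lie_auts sol4_mult" by (simp add: Aut4_simps)
    obtain k a b al de where ad: "al \<noteq> 0" "de \<noteq> 0" and
      c: "f = khat k \<circ> (inn (a, b, 0, 0) \<circ> dg al de) \<or> f = khat k \<circ> (inn (a, b, 0, 0) \<circ> dg al de \<circ> sw)"
      using Aut4_class[OF f] by blast
    obtain v r s t where vr: "r > 0" "s \<in> {-1, 1}" "t \<in> {-1, 1}"
      and d: "dg al de = inn (0, 0, 0, v) \<circ> dg (r * s) (r * t)"
      using dg_split[OF ad] by blast
    define n where "n = khat k \<circ> inn (sol4_mult (a, b, 0, 0) (0, 0, 0, v))"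
    have nN: "n \<in> Nset" by (simp add: n_def NsetI)
    have "\<exists>A \<in> carrier D4. f = n \<circ> hmap r A"
      using c
    proof
      assume f1: "f = khat k \<circ> (inn (a, b, 0, 0) \<circ> dg al de)"
      have "f = n \<circ> hmap r (diagM s t)"
        by (simp add: f1 d n_def hmap_diag fun_eq_iff inn_inn)
      then show ?thesis using diag_in[OF vr(2,3)] by blast
    next
      assume f1: "f = khat k \<circ> (inn (a, b, 0, 0) \<circ> dg al de \<circ> sw)"
      have "f = n \<circ> hmap r (antiM s t)"
        using pm_ne0[OF vr(2)] by (simp add: f1 d n_def hmap_anti fun_eq_iff inn_inn)
      then show ?thesis using anti_in[OF vr(2,3)] by blast
    qed
    then obtain A where A: "A \<in> carrier D4" "f = n \<circ> hmap r A" by blast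
    have "hmap r A \<in> Hpos"
      unfolding Hpos_def using A(1) vr(1)
      by (auto simp: Psi_def R_pos_def intro!: image_eqI[of _ _ "(r, A)"])
    then show "f \<in> Nset <#>\<^bsub>Aut_Sol4\<^esub> Hpos"
      unfolding set_mult_def Aut4_simps using nN A(2) by blast
  qed
qed

section \<open>Isomorphisms for the first decomposition\<close>

lemma K_iso: "Aut_Sol4\<lparr>carrier := aut_kernel\<rparr> \<cong> R_add"
proof -
  define kap where "kap f = fst (snd (snd (f (0::real, 0::real, 0::real, 1::real))))" for f :: "r4 \<Rightarrow> r4"
  have kk: "kap (khat k) = k" for k by (simp add: kap_def khat_def)
  have "kap \<in> iso (Aut_Sol4\<lparr>carrier := aut_kernel\<rparr>) R_add"
  proof (rule isoI)
    show "kap \<in> hom (Aut_Sol4\<lparr>carrier := aut_kernel\<rparr>) R_add"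
    proof (rule homI)
      fix x y assume "x \<in> carrier (Aut_Sol4\<lparr>carrier := aut_kernel\<rparr>)" "y \<in> carrier (Aut_Sol4\<lparr>carrier := aut_kernel\<rparr>)"
      then have xy: "x \<in> aut_kernel" "y \<in> aut_kernel" by simp_all
      obtain k where "x = khat k" using kernel_khat[OF xy(1)] by blast
      moreover obtain k' where "y = khat k'" using kernel_khat[OF xy(2)] by blast
      ultimately show "kap (x \<otimes>\<^bsub>Aut_Sol4\<lparr>carrier := aut_kernel\<rparr>\<^esub> y) = kap x \<otimes>\<^bsub>R_add\<^esub> kap y"
        by (simp add: Aut_group_def R_add_def kap_def khat_def)
    qed (simp add: R_add_def)
    show "bij_betw kap (carrier (Aut_Sol4\<lparr>carrier := aut_kernel\<rparr>)) (carrier R_add)"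
      unfolding bij_betw_def
    proof
      show "inj_on kap (carrier (Aut_Sol4\<lparr>carrier := aut_kernel\<rparr>))"
      proof (rule inj_onI)
        fix x y assume "x \<in> carrier (Aut_Sol4\<lparr>carrier := aut_kernel\<rparr>)" "y \<in> carrier (Aut_Sol4\<lparr>carrier := aut_kernel\<rparr>)"
          and e: "kap x = kap y"
        then have xy: "x \<in> aut_kernel" "y \<in> aut_kernel" by simp_all
        obtain k where "x = khat k" using kernel_khat[OF xy(1)] by blast
        moreover obtain k' where "y = khat k'" using kernel_khat[OF xy(2)] by blast
        ultimately show "x = y" using e by (simp add: kk)
      qed
      show "kap ` carrier (Aut_Sol4\<lparr>carrier := aut_kernel\<rparr>) = carrier R_add"
      proof
        show "kap ` carrier (Aut_Sol4\<lparr>carrier := aut_kernel\<rparr>) \<subseteq> carrier R_add" by (simp add: R_add_def)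
        show "carrier R_add \<subseteq> kap ` carrier (Aut_Sol4\<lparr>carrier := aut_kernel\<rparr>)"
        proof
          fix k assume "k \<in> carrier R_add"
          have "kap (khat k) = k" by (rule kk)
          then show "k \<in> kap ` carrier (Aut_Sol4\<lparr>carrier := aut_kernel\<rparr>)"
            using khat_kernel[of k] by (metis image_eqI partial_object.select_convs(1) partial_object.surjective partial_object.update_convs(1))
        qed
      qed
    qed
  qed
  then show ?thesis by (rule is_isoI)
qed

lemma L_iso: "Aut_Sol4\<lparr>carrier := Lset\<rparr> \<cong> Aut_Sol3"
proof -
  have "piA \<in> iso (Aut_Sol4\<lparr>carrier := Lset\<rparr>) Aut_Sol3"
  proof (rule isoI)
    show "piA \<in> hom (Aut_Sol4\<lparr>carrier := Lset\<rparr>) Aut_Sol3"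
    proof (rule homI)
      fix x assume "x \<in> carrier (Aut_Sol4\<lparr>carrier := Lset\<rparr>)"
      then show "piA x \<in> carrier Aut_Sol3" by (simp add: Aut_group_def piA_aut Lset_aut)
    next
      fix x y assume "x \<in> carrier (Aut_Sol4\<lparr>carrier := Lset\<rparr>)" "y \<in> carrier (Aut_Sol4\<lparr>carrier := Lset\<rparr>)"
      then show "piA (x \<otimes>\<^bsub>Aut_Sol4\<lparr>carrier := Lset\<rparr>\<^esub> y) = piA x \<otimes>\<^bsub>Aut_Sol3\<^esub> piA y"
        by (simp add: Aut_group_def piA_comp Lset_aut)
    qed
    show "bij_betw piA (carrier (Aut_Sol4\<lparr>carrier := Lset\<rparr>)) (carrier Aut_Sol3)"
      unfolding bij_betw_def
    proof
      show "inj_on piA (carrier (Aut_Sol4\<lparr>carrier := Lset\<rparr>))"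
      proof (rule inj_onI)
        fix f g assume "f \<in> carrier (Aut_Sol4\<lparr>carrier := Lset\<rparr>)" "g \<in> carrier (Aut_Sol4\<lparr>carrier := Lset\<rparr>)"
          and e: "piA f = piA g"
        then have fL: "f \<in> Lset" and gL: "g \<in> Lset" by simp_all
        obtain g' where g': "g' \<in> Lset" "g' \<circ> g = id" using Lset_inv[OF gL] by blast
        have ga: "g \<in> lie_auts sol4_mult" "g' \<in> lie_auts sol4_mult" "f \<in> lie_auts sol4_mult"
          using gL g'(1) fL by (simp_all add: Lset_aut)
        obtain gi where gi: "\<And>y. g (gi y) = y" using lie_autsD(3)[OF ga(1)] by blast
        have gg': "g \<circ> g' = id"
        proof
          fix y have "g (g' (g (gi y))) = g (gi y)" using fun_cong[OF g'(2), of "gi y"] by simp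
          then show "(g \<circ> g') y = id y" by (simp add: gi)
        qed
        have "piA (f \<circ> g') = piA g \<circ> piA g'" by (simp add: piA_comp ga e)
        also have "\<dots> = id" by (simp add: piA_comp[OF ga(1,2), symmetric] gg' piA_id)
        finally have "f \<circ> g' \<in> aut_kernel" by (simp add: kernel_iff lie_auts_comp ga)
        moreover have "f \<circ> g' \<in> Lset" by (rule Lset_comp[OF fL g'(1)])
        ultimately have "f \<circ> g' = id" by (rule KL_triv)
        then have "f \<circ> g' \<circ> g = g" by simp
        then show "f = g" by (simp add: o_assoc[symmetric] g'(2))
      qed
      show "piA ` carrier (Aut_Sol4\<lparr>carrier := Lset\<rparr>) = carrier Aut_Sol3"
      proof
        show "piA ` carrier (Aut_Sol4\<lparr>carrier := Lset\<rparr>) \<subseteq> carrier Aut_Sol3"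
          by (auto simp: Aut_group_def piA_aut Lset_aut)
        show "carrier Aut_Sol3 \<subseteq> piA ` carrier (Aut_Sol4\<lparr>carrier := Lset\<rparr>)"
        proof
          fix h assume "h \<in> carrier Aut_Sol3"
          then have h: "h \<in> lie_auts sol3_mult" by (simp add: Aut_group_def)
          obtain al de a b where ad: "al \<noteq> 0" "de \<noteq> 0" and c: "h = F3 al de a b \<or> h = F3 al de a b \<circ> sw3"
            using C3[OF h] by blast
          have "\<exists>l \<in> Lset. h = piA l"
            using c
          proof
            assume h1: "h = F3 al de a b"
            show ?thesis
              by (rule bexI[OF _ LsetI[OF dg_in[OF ad], of "(a,b,0,0)"]]) (simp add: h1 piA_L1)
          next
            assume h1: "h = F3 al de a b \<circ> sw3"
            have "inn (a, b, 0, 0) \<circ> (dg al de \<circ> sw) = inn (a, b, 0, 0) \<circ> dg al de \<circ> sw"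
              by (simp add: o_assoc)
            then show ?thesis
              by (intro bexI[OF _ LsetI[OF dgsw_in[OF ad], of "(a,b,0,0)"]]) (simp add: h1 piA_L2)
          qed
          then show "h \<in> piA ` carrier (Aut_Sol4\<lparr>carrier := Lset\<rparr>)" by auto
        qed
      qed
    qed
  qed
  then show ?thesis by (rule is_isoI)
qed


theorem proposition1p3:
  shows "group Aut_Sol4
    \<and> (\<exists>L. int_semidirect Aut_Sol4 aut_kernel L
           \<and> Aut_Sol4\<lparr>carrier := aut_kernel\<rparr> \<cong> R_add
           \<and> Aut_Sol4\<lparr>carrier := L\<rparr> \<cong> Aut_Sol3)
    \<and> (\<exists>N H. int_semidirect Aut_Sol4 N H \<and> aut_kernel \<subseteq> N
           \<and> Aut_Sol4\<lparr>carrier := N\<rparr> \<cong> R_add \<times>\<times> Sol3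
           \<and> Aut_Sol4\<lparr>carrier := H\<rparr> \<cong> R_pos \<times>\<times> D4)"
proof -
  have g: "group Aut_Sol4" by (rule group_Aut)
  have one: "\<one>\<^bsub>Aut_Sol4\<^esub> = id" by (simp add: Aut_group_def)
  have idK: "id \<in> aut_kernel" using khat_kernel[of 0] by (simp add: khat_0)
  have idN: "id \<in> Nset" using NsetI[of 0 "(0,0,0,0)"] by (simp add: khat_0 inn_one)
  have idH: "id \<in> Hpos" using subgroup.one_closed[OF H_sub] by (simp add: one)
  have KL: "int_semidirect Aut_Sol4 aut_kernel Lset"
    unfolding int_semidirect_def
  proof (intro conjI)
    show "aut_kernel \<lhd> Aut_Sol4" by (rule K_normal)
    show "subgroup Lset Aut_Sol4" by (rule Lset_sub)
    show "aut_kernel \<inter> Lset = {\<one>\<^bsub>Aut_Sol4\<^esub>}" using KL_triv id_Lset idK by (auto simp: one)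
    show "aut_kernel <#>\<^bsub>Aut_Sol4\<^esub> Lset = carrier Aut_Sol4" by (rule KL_prod)
  qed
  have NH: "int_semidirect Aut_Sol4 Nset Hpos"
    unfolding int_semidirect_def
  proof (intro conjI)
    show "Nset \<lhd> Aut_Sol4" by (rule N_normal)
    show "subgroup Hpos Aut_Sol4" by (rule H_sub)
    show "Nset \<inter> Hpos = {\<one>\<^bsub>Aut_Sol4\<^esub>}" using NH_triv idN idH by (auto simp: one)
    show "Nset <#>\<^bsub>Aut_Sol4\<^esub> Hpos = carrier Aut_Sol4" by (rule NH_prod)
  qed
  have KN: "aut_kernel \<subseteq> Nset"
  proof
    fix f assume "f \<in> aut_kernel"
    then obtain k where "f = khat k" using kernel_khat by blast
    then have "f = khat k \<circ> inn (0,0,0,0)" by (simp add: inn_one)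
    then show "f \<in> Nset" by (simp add: NsetI)
  qed
  show ?thesis using g KL K_iso L_iso NH KN N_iso H_iso by blast
qed

end
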